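(* Consider the generalized Pólya urn with $A\ge2$ agents constructed via the exponential embedding. Suppose the set $M=\{i\in[A]:\sum_{k=1}^\infty1/F_i(k)<\infty\}$ is non-empty but $1\notin M$. Assume moreover $\lim_{k\to\infty}F_1(k)=\infty$ and that $F_i$ is strictly monotone for every $i\in M$. Then $$-\log\mathbb{P}(X_1(\infty)>x)\sim d\sum_{k=X_1(0)}^x\frac{1}{F_1(k)}\quad\text{as }x\to\infty,\qquad\text{where } d=\sum_{i\in M}F_i(X_i(0)).$$
   Context: $\mathbb{N}=\{1,2,\dots\}$, $[A]=\{1,\dots,A\}$, $e^{(i)}$ the $i$-th unit vector. For $i\in[A]$, $F_i\colon\mathbb{N}\to(0,\infty)$ and $X_i(0)\in\mathbb{N}$. Let $\Xi_1,\dots,\Xi_A$ be independent pure birth processes: $\Xi_i$ has independent sojourn times $\tau_i(k)$, $k\ge X_i(0)$, exponential with rate $F_i(k)$, and $\Xi_i(t)=\min\{k:\sum_{l=X_i(0)}^k\tau_i(l)>t\}$ (min of empty set $=\infty$). With $\Xi=(\Xi_1,\dots,\Xi_A)$, $t_0=0$, $t_{n+1}=\inf\{t>t_n:\Xi(t)\ne\Xi(t_n)\}$, the urn is $X(n)=\Xi(t_n)$, a Markov chain with $\mathbb{P}(X(n+1)-X(n)=e^{(i)}\mid X(n))=F_i(X_i(n))/\sum_jF_j(X_j(n))$; $X_1(\infty)=\lim_nX_1(n)$. $f\sim h$ means $f/h\to1$. *)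

theory Defs
  imports "HOL-Probability.Probability" "HOL-Library.Landau_Symbols"
begin

text \<open>Exponential embedding. tau i k is the sojourn time of agent i at level k
  (k \<ge> X0 i). Xi i t is the pure birth process of agent i (value \<infinity> after explosion).\<close>

definition birth_proc :: "(nat \<Rightarrow> nat \<Rightarrow> 'a \<Rightarrow> real) \<Rightarrow> (nat \<Rightarrow> nat) \<Rightarrow> nat \<Rightarrow> real \<Rightarrow> 'a \<Rightarrow> enat" where
  "birth_proc tau X0 i t \<omega> =
     (if \<exists>k. (\<Sum>l\<in>{X0 i..k}. tau i l \<omega>) > t
      then enat (LEAST k. (\<Sum>l\<in>{X0 i..k}. tau i l \<omega>) > t) else \<infinity>)"

primrec jump_time :: "(nat \<Rightarrow> nat \<Rightarrow> 'a \<Rightarrow> real) \<Rightarrow> (nat \<Rightarrow> nat) \<Rightarrow> nat \<Rightarrow> nat \<Rightarrow> 'a \<Rightarrow> real" where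
  "jump_time tau X0 A 0 \<omega> = 0"
| "jump_time tau X0 A (Suc n) \<omega> =
     Inf {s. s > jump_time tau X0 A n \<omega> \<and>
             (\<exists>i\<in>{1..A}. birth_proc tau X0 i s \<omega> \<noteq> birth_proc tau X0 i (jump_time tau X0 A n \<omega>) \<omega>)}"

definition urn :: "(nat \<Rightarrow> nat \<Rightarrow> 'a \<Rightarrow> real) \<Rightarrow> (nat \<Rightarrow> nat) \<Rightarrow> nat \<Rightarrow> nat \<Rightarrow> nat \<Rightarrow> 'a \<Rightarrow> enat" where
  "urn tau X0 A n i \<omega> = birth_proc tau X0 i (jump_time tau X0 A n \<omega>) \<omega>"

text \<open>X_i(\<infinity>) = lim_n X_i(n); the sequence is nondecreasing, so the limit is the supremum.\<close>

definition urn_limit :: "(nat \<Rightarrow> nat \<Rightarrow> 'a \<Rightarrow> real) \<Rightarrow> (nat \<Rightarrow> nat) \<Rightarrow> nat \<Rightarrow> nat \<Rightarrow> 'a \<Rightarrow> enat" where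
  "urn_limit tau X0 A i \<omega> = (SUP n. urn tau X0 A n i \<omega>)"

end

theory Submission
  imports Defs
begin

definition psum :: "(nat \<Rightarrow> nat \<Rightarrow> 'a \<Rightarrow> real) \<Rightarrow> (nat \<Rightarrow> nat) \<Rightarrow> nat \<Rightarrow> nat \<Rightarrow> 'a \<Rightarrow> real" where
  "psum tau X0 i k \<omega> = (\<Sum>l\<in>{X0 i..k}. tau i l \<omega>)"

lemma bp_gt_iff:
  "(enat x < birth_proc tau X0 i t \<omega>) \<longleftrightarrow> (\<forall>k\<le>x. psum tau X0 i k \<omega> \<le> t)"
proof (cases "\<exists>k. (\<Sum>l\<in>{X0 i..k}. tau i l \<omega>) > t")
  case True
  let ?P = "\<lambda>k. (\<Sum>l\<in>{X0 i..k}. tau i l \<omega>) > t"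
  have "(x < (LEAST k. ?P k)) \<longleftrightarrow> (\<forall>k\<le>x. \<not> ?P k)"
  proof
    assume "x < (LEAST k. ?P k)"
    then show "\<forall>k\<le>x. \<not> ?P k" by (metis le_less_trans not_less_Least)
  next
    assume "\<forall>k\<le>x. \<not> ?P k"
    moreover have "?P (LEAST k. ?P k)" using True by (rule LeastI_ex)
    ultimately show "x < (LEAST k. ?P k)" by (meson not_le)
  qed
  then show ?thesis using True unfolding birth_proc_def psum_def by (auto simp: not_less)
next
  case False
  have "birth_proc tau X0 i t \<omega> = \<infinity>" using False unfolding birth_proc_def by auto
  moreover have "\<forall>k\<le>x. psum tau X0 i k \<omega> \<le> t" using False unfolding psum_def by (auto simp: not_less)
  ultimately show ?thesis by simp
qed

lemma bp_change:
  assumes "psum tau X0 i k \<omega> > t" and "s > t"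
  shows "(birth_proc tau X0 i s \<omega> \<noteq> birth_proc tau X0 i t \<omega>) \<longleftrightarrow>
           psum tau X0 i (LEAST k. psum tau X0 i k \<omega> > t) \<omega> \<le> s"
proof -
  let ?p = "\<lambda>k. psum tau X0 i k \<omega>"
  define L where "L = (LEAST k. ?p k > t)"
  have PL: "?p L > t" unfolding L_def using assms(1) by (rule LeastI)
  have below: "\<And>k. k < L \<Longrightarrow> ?p k \<le> t" unfolding L_def using not_less_Least by force
  have bt: "birth_proc tau X0 i t \<omega> = enat L"
    using assms(1) unfolding birth_proc_def L_def psum_def by auto
  show ?thesis unfolding L_def[symmetric]
  proof
    assume ne: "birth_proc tau X0 i s \<omega> \<noteq> birth_proc tau X0 i t \<omega>"
    show "?p L \<le> s"
    proof (rule ccontr)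
      assume "\<not> ?p L \<le> s"
      then have "?p L > s" by simp
      moreover have "\<And>k. k < L \<Longrightarrow> \<not> ?p k > s" using below assms(2) by force
      ultimately have "(LEAST k. ?p k > s) = L"
        by (metis (mono_tags, lifting) Least_equality not_less)
      then have "birth_proc tau X0 i s \<omega> = enat L"
        using \<open>?p L > s\<close> unfolding birth_proc_def psum_def by auto
      with ne bt show False by simp
    qed
  next
    assume le: "?p L \<le> s"
    show "birth_proc tau X0 i s \<omega> \<noteq> birth_proc tau X0 i t \<omega>"
    proof (cases "\<exists>k. ?p k > s")
      case True
      have "?p (LEAST k. ?p k > s) > s" using True by (rule LeastI_ex)
      then have "(LEAST k. ?p k > s) \<noteq> L" using le by auto
      then show ?thesis using True bt unfolding birth_proc_def psum_def by auto
    next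
      case False
      then show ?thesis using bt unfolding birth_proc_def psum_def by auto
    qed
  qed
qed

lemma bp_nochange:
  assumes "\<not> (\<exists>k. psum tau X0 i k \<omega> > t)" and "s > t"
  shows "birth_proc tau X0 i s \<omega> = birth_proc tau X0 i t \<omega>"
proof -
  have "\<not> (\<exists>k. psum tau X0 i k \<omega> > s)" using assms by (meson less_trans)
  then show ?thesis using assms(1) unfolding birth_proc_def psum_def by auto
qed

definition nxt :: "(nat \<Rightarrow> nat \<Rightarrow> 'a \<Rightarrow> real) \<Rightarrow> (nat \<Rightarrow> nat) \<Rightarrow> nat \<Rightarrow> real \<Rightarrow> 'a \<Rightarrow> real" where
  "nxt tau X0 i t \<omega> = psum tau X0 i (LEAST k. psum tau X0 i k \<omega> > t) \<omega>"

lemma nxt_gt: "\<exists>k. psum tau X0 i k \<omega> > t \<Longrightarrow> nxt tau X0 i t \<omega> > t"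
  unfolding nxt_def by (rule LeastI_ex)

lemma jump_time_Suc:
  fixes tau :: "nat \<Rightarrow> nat \<Rightarrow> 'a \<Rightarrow> real" and X0 :: "nat \<Rightarrow> nat" and A n :: nat and \<omega> :: 'a
  defines "t \<equiv> jump_time tau X0 A n \<omega>"
  defines "G \<equiv> {i\<in>{1..A}. \<exists>k. psum tau X0 i k \<omega> > t}"
  shows "jump_time tau X0 A (Suc n) \<omega> =
           (if G = {} then Inf {} else Min ((\<lambda>i. nxt tau X0 i t \<omega>) ` G))"
proof -
  let ?S = "{s. s > t \<and> (\<exists>i\<in>{1..A}. birth_proc tau X0 i s \<omega> \<noteq> birth_proc tau X0 i t \<omega>)}"
  have S: "?S = {s. \<exists>i\<in>G. nxt tau X0 i t \<omega> \<le> s}"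
  proof (intro set_eqI iffI)
    fix s assume "s \<in> ?S"
    then obtain i where i: "i \<in> {1..A}" "s > t" "birth_proc tau X0 i s \<omega> \<noteq> birth_proc tau X0 i t \<omega>" by auto
    then obtain k where k: "psum tau X0 i k \<omega> > t" using bp_nochange by metis
    have "nxt tau X0 i t \<omega> \<le> s" using bp_change[OF k i(2)] i(3) unfolding nxt_def by simp
    moreover have "i \<in> G" unfolding G_def using i(1) k by auto
    ultimately show "s \<in> {s. \<exists>i\<in>G. nxt tau X0 i t \<omega> \<le> s}" by auto
  next
    fix s assume "s \<in> {s. \<exists>i\<in>G. nxt tau X0 i t \<omega> \<le> s}"
    then obtain i where i: "i \<in> G" "nxt tau X0 i t \<omega> \<le> s" by auto
    then obtain k where k: "psum tau X0 i k \<omega> > t" unfolding G_def by auto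
    have "\<exists>k. psum tau X0 i k \<omega> > t" using k by blast
    from nxt_gt[OF this] have "s > t" using i(2) by force
    then show "s \<in> ?S" using i bp_change[OF k \<open>s > t\<close>] unfolding G_def nxt_def by auto
  qed
  have jt: "jump_time tau X0 A (Suc n) \<omega> = Inf ?S" unfolding t_def by simp
  show ?thesis
  proof (cases "G = {}")
    case True
    have e: "?S = {}" using S True by simp
    show ?thesis using True jt unfolding e by simp
  next
    case False
    have fin: "finite G" unfolding G_def by auto
    let ?m = "Min ((\<lambda>i. nxt tau X0 i t \<omega>) ` G)"
    have "?m \<in> (\<lambda>i. nxt tau X0 i t \<omega>) ` G" using fin False by (intro Min_in) auto
    then have "?m \<in> {s. \<exists>i\<in>G. nxt tau X0 i t \<omega> \<le> s}" by auto
    moreover have "\<forall>s\<in>{s. \<exists>i\<in>G. nxt tau X0 i t \<omega> \<le> s}. ?m \<le> s"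
      using fin by (auto intro: order.trans[OF Min_le])
    ultimately have "Inf {s. \<exists>i\<in>G. nxt tau X0 i t \<omega> \<le> s} = ?m" by (intro cInf_eq_minimum) auto
    then show ?thesis using jt S False by simp
  qed
qed


definition posw :: "(nat \<Rightarrow> nat \<Rightarrow> 'a \<Rightarrow> real) \<Rightarrow> (nat \<Rightarrow> nat) \<Rightarrow> nat \<Rightarrow> 'a \<Rightarrow> bool" where
  "posw tau X0 A \<omega> \<longleftrightarrow> (\<forall>i\<in>{1..A}. \<forall>k\<ge>X0 i. tau i k \<omega> > 0)"

lemma psum_mono:
  assumes "posw tau X0 A \<omega>" "i \<in> {1..A}" "k \<le> k'"
  shows "psum tau X0 i k \<omega> \<le> psum tau X0 i k' \<omega>"
proof -
  have "{X0 i..k} \<subseteq> {X0 i..k'}" using assms(3) by auto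
  then show ?thesis unfolding psum_def
    using assms(1,2) unfolding posw_def
    by (intro sum_mono2) (auto intro: less_imp_le)
qed

lemma psum_strict:
  assumes "posw tau X0 A \<omega>" "i \<in> {1..A}" "k < k'" "X0 i \<le> k'"
  shows "psum tau X0 i k \<omega> < psum tau X0 i k' \<omega>"
proof -
  have "psum tau X0 i k \<omega> \<le> psum tau X0 i (k' - 1) \<omega>" using assms by (intro psum_mono) auto
  moreover have "psum tau X0 i k' \<omega> = psum tau X0 i (k' - 1) \<omega> + tau i k' \<omega>"
  proof -
    have "{X0 i..k'} = insert k' {X0 i..k' - 1}" using assms(3,4) by auto
    moreover have "k' \<notin> {X0 i..k' - 1}" using assms(3) by auto
    ultimately show ?thesis unfolding psum_def by (simp add: add.commute)
  qed
  moreover have "tau i k' \<omega> > 0" using assms unfolding posw_def by auto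
  ultimately show ?thesis by simp
qed

lemma psum_ge_first:
  assumes "posw tau X0 A \<omega>" "i \<in> {1..A}" "X0 i \<le> k"
  shows "tau i (X0 i) \<omega> \<le> psum tau X0 i k \<omega>"
proof -
  have "psum tau X0 i (X0 i) \<omega> = tau i (X0 i) \<omega>" unfolding psum_def by simp
  then show ?thesis using psum_mono[OF assms(1,2,3)] by simp
qed

lemma psum_nonneg:
  assumes "posw tau X0 A \<omega>" "i \<in> {1..A}"
  shows "0 \<le> psum tau X0 i k \<omega>"
  using assms unfolding psum_def posw_def by (intro sum_nonneg) (auto intro: less_imp_le)

lemma psum_pos_imp:
  assumes "psum tau X0 i k \<omega> > 0"
  shows "X0 i \<le> k"
  using assms unfolding psum_def by (cases "X0 i \<le> k") auto

lemma jt_inv: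
  assumes pos: "posw tau X0 A \<omega>" and A: "A \<ge> 1"
  shows "0 \<le> jump_time tau X0 A n \<omega> \<and> (\<forall>i\<in>{1..A}. \<exists>k. psum tau X0 i k \<omega> > jump_time tau X0 A n \<omega>)"
proof (induction n)
  case 0
  have "\<forall>i\<in>{1..A}. psum tau X0 i (X0 i) \<omega> > 0"
    using pos unfolding posw_def psum_def by auto
  then show ?case by auto
next
  case (Suc n)
  let ?t = "jump_time tau X0 A n \<omega>"
  let ?G = "{i\<in>{1..A}. \<exists>k. psum tau X0 i k \<omega> > ?t}"
  have G: "?G = {1..A}" using Suc.IH by auto
  have ne: "{1..A} \<noteq> {}" using A by auto
  have eq: "jump_time tau X0 A (Suc n) \<omega> = Min ((\<lambda>i. nxt tau X0 i ?t \<omega>) ` {1..A})"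
    using jump_time_Suc[of tau X0 A n \<omega>] ne unfolding G by (simp del: jump_time.simps)
  have gt: "\<forall>i\<in>{1..A}. nxt tau X0 i ?t \<omega> > ?t" using Suc.IH by (auto intro!: nxt_gt)
  have "Min ((\<lambda>i. nxt tau X0 i ?t \<omega>) ` {1..A}) \<in> (\<lambda>i. nxt tau X0 i ?t \<omega>) ` {1..A}"
    using ne by (intro Min_in) auto
  then have "jump_time tau X0 A (Suc n) \<omega> > ?t" using eq gt by auto
  then have nn: "0 \<le> jump_time tau X0 A (Suc n) \<omega>" using Suc.IH by simp
  have "\<exists>k. psum tau X0 i k \<omega> > jump_time tau X0 A (Suc n) \<omega>" if i: "i \<in> {1..A}" for i
  proof -
    define L where "L = (LEAST k. psum tau X0 i k \<omega> > ?t)"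
    have nx: "nxt tau X0 i ?t \<omega> = psum tau X0 i L \<omega>" unfolding nxt_def L_def ..
    have "jump_time tau X0 A (Suc n) \<omega> \<le> nxt tau X0 i ?t \<omega>" using eq i by simp
    moreover have "psum tau X0 i L \<omega> > 0" using gt i nx Suc.IH by force
    then have "X0 i \<le> L" by (rule psum_pos_imp)
    then have "psum tau X0 i L \<omega> < psum tau X0 i (Suc L) \<omega>"
      using pos i by (intro psum_strict) auto
    ultimately show ?thesis using nx by (intro exI[of _ "Suc L"]) simp
  qed
  then show ?case using nn by blast
qed

lemma jt_step_pos:
  assumes pos: "posw tau X0 A \<omega>" and A: "A \<ge> 1"
  shows "jump_time tau X0 A (Suc n) \<omega> > jump_time tau X0 A n \<omega> \<and>
         (\<exists>i\<in>{1..A}. jump_time tau X0 A (Suc n) \<omega> = nxt tau X0 i (jump_time tau X0 A n \<omega>) \<omega>)"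
proof -
  let ?t = "jump_time tau X0 A n \<omega>"
  have IH: "\<forall>i\<in>{1..A}. \<exists>k. psum tau X0 i k \<omega> > ?t" using jt_inv[OF pos A] by blast
  let ?G = "{i\<in>{1..A}. \<exists>k. psum tau X0 i k \<omega> > ?t}"
  have G: "?G = {1..A}" using IH by auto
  have ne: "{1..A} \<noteq> {}" using A by auto
  have eq: "jump_time tau X0 A (Suc n) \<omega> = Min ((\<lambda>i. nxt tau X0 i ?t \<omega>) ` {1..A})"
    using jump_time_Suc[of tau X0 A n \<omega>] ne unfolding G by (simp del: jump_time.simps)
  have gt: "\<forall>i\<in>{1..A}. nxt tau X0 i ?t \<omega> > ?t" using IH by (auto intro!: nxt_gt)
  have "Min ((\<lambda>i. nxt tau X0 i ?t \<omega>) ` {1..A}) \<in> (\<lambda>i. nxt tau X0 i ?t \<omega>) ` {1..A}"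
    using ne by (intro Min_in) auto
  then show ?thesis using eq gt by auto
qed

lemma urn_limit_gt_iff:
  "enat x < urn_limit tau X0 A 1 \<omega> \<longleftrightarrow> (\<exists>n. \<forall>k\<le>x. psum tau X0 1 k \<omega> \<le> jump_time tau X0 A n \<omega>)"
  unfolding urn_limit_def urn_def by (simp add: less_SUP_iff bp_gt_iff)

lemma upper_path:
  assumes pos: "posw tau X0 A \<omega>" and A: "A \<ge> 1"
    and E: "enat x < urn_limit tau X0 A 1 \<omega>" and i: "i \<in> {1..A}"
  shows "\<exists>k. psum tau X0 1 x \<omega> < psum tau X0 i k \<omega>"
proof -
  obtain n where n: "\<forall>k\<le>x. psum tau X0 1 k \<omega> \<le> jump_time tau X0 A n \<omega>"
    using E urn_limit_gt_iff by metis
  obtain k where "psum tau X0 i k \<omega> > jump_time tau X0 A n \<omega>" using jt_inv[OF pos A] i by blast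
  then show ?thesis using n by (intro exI[of _ k]) force
qed

lemma lower_path:
  assumes pos: "posw tau X0 A \<omega>" and A: "A \<ge> 1" and Ms: "Ms \<subseteq> {1..A}" and one: "1 \<notin> Ms"
    and hM: "\<forall>i\<in>Ms. tau i (X0 i) \<omega> > a"
    and h1: "psum tau X0 1 x \<omega> < a"
    and hJ: "\<forall>j\<in>{1..A} - Ms - {1}. psum tau X0 j K \<omega> > a"
  shows "enat x < urn_limit tau X0 A 1 \<omega>"
proof -
  let ?t = "\<lambda>n. jump_time tau X0 A n \<omega>"
  have one1: "1 \<in> {1..A}" using A by auto
  have "\<exists>n. psum tau X0 1 x \<omega> \<le> ?t n"
  proof (rule ccontr)
    assume "\<not> ?thesis"
    then have lt: "\<forall>n. ?t n < psum tau X0 1 x \<omega>" by (simp add: not_le)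
    define V where "V = (\<lambda>(i, k). psum tau X0 i k \<omega>) ` ({1..A} \<times> {..max x K})"
    have finV: "finite V" unfolding V_def by auto
    have inV: "?t (Suc n) \<in> V" for n
    proof -
      obtain i where i: "i \<in> {1..A}" and eqi: "?t (Suc n) = nxt tau X0 i (?t n) \<omega>"
        and gtn: "?t (Suc n) > ?t n"
        using jt_step_pos[OF pos A, of n] by blast
      define L where "L = (LEAST k. psum tau X0 i k \<omega> > ?t n)"
      have nx: "?t (Suc n) = psum tau X0 i L \<omega>" using eqi unfolding nxt_def L_def .
      have "0 \<le> ?t n" using jt_inv[OF pos A] by blast
      then have ppos: "psum tau X0 i L \<omega> > 0" using nx gtn by simp
      then have XL: "X0 i \<le> L" by (rule psum_pos_imp)
      have small: "psum tau X0 i L \<omega> < psum tau X0 1 x \<omega>" using nx lt by metis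
      have "L \<le> max x K"
      proof (cases "i \<in> Ms")
        case True
        have "tau i (X0 i) \<omega> \<le> psum tau X0 i L \<omega>" using psum_ge_first[OF pos i XL] .
        then have False using hM True small h1 by force
        then show ?thesis ..
      next
        case False
        show ?thesis
        proof (cases "i = 1")
          case True
          have "L < x"
          proof (rule ccontr)
            assume "\<not> L < x"
            then have "psum tau X0 1 x \<omega> \<le> psum tau X0 1 L \<omega>" using pos one1 by (intro psum_mono) auto
            then show False using small True by simp
          qed
          then show ?thesis by simp
        next
          case False2: False
          have "L < K"
          proof (rule ccontr)
            assume "\<not> L < K"
            then have "psum tau X0 i K \<omega> \<le> psum tau X0 i L \<omega>" using pos i by (intro psum_mono) auto
            moreover have "psum tau X0 i K \<omega> > a" using hJ i False False2 by auto
            ultimately show False using small h1 by simp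
          qed
          then show ?thesis by simp
        qed
      qed
      then show ?thesis unfolding V_def using nx i by force
    qed
    have sm: "strict_mono (\<lambda>n. ?t (Suc n))"
      by (rule strict_monoI_Suc) (use jt_step_pos[OF pos A] in blast)
    then have "inj (\<lambda>n. ?t (Suc n))" by (rule strict_mono_imp_inj_on)
    then have "infinite (range (\<lambda>n. ?t (Suc n)))" by (simp add: finite_image_iff)
    moreover have "range (\<lambda>n. ?t (Suc n)) \<subseteq> V" using inV by auto
    ultimately show False using finV finite_subset by blast
  qed
  then obtain n where n: "psum tau X0 1 x \<omega> \<le> ?t n" by blast
  have "\<forall>k\<le>x. psum tau X0 1 k \<omega> \<le> ?t n"
    using n psum_mono[OF pos one1] by (meson order.trans)
  then show ?thesis using urn_limit_gt_iff by metis
qed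

lemma jt_le_iff:
  fixes tau :: "nat \<Rightarrow> nat \<Rightarrow> 'a \<Rightarrow> real" and X0 :: "nat \<Rightarrow> nat" and A n :: nat and \<omega> :: 'a
  shows "jump_time tau X0 A (Suc n) \<omega> \<le> c \<longleftrightarrow>
     (((\<forall>i\<in>{1..A}. \<forall>k. psum tau X0 i k \<omega> \<le> jump_time tau X0 A n \<omega>) \<and> Inf {} \<le> c) \<or>
          (\<exists>i\<in>{1..A}. (\<exists>k. psum tau X0 i k \<omega> > jump_time tau X0 A n \<omega>) \<and> nxt tau X0 i (jump_time tau X0 A n \<omega>) \<omega> \<le> c))"
proof -
  let ?t = "jump_time tau X0 A n \<omega>"
  let ?G = "{i\<in>{1..A}. \<exists>k. psum tau X0 i k \<omega> > ?t}"
  have eq: "jump_time tau X0 A (Suc n) \<omega> = (if ?G = {} then Inf {} else Min ((\<lambda>i. nxt tau X0 i ?t \<omega>) ` ?G))"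
    by (rule jump_time_Suc)
  show ?thesis
  proof (cases "?G = {}")
    case True
    have h1: "jump_time tau X0 A (Suc n) \<omega> = Inf {}" using eq unfolding if_P[OF True] .
    have n1: "\<not> (\<exists>i\<in>{1..A}. \<exists>k. psum tau X0 i k \<omega> > ?t)" using True by blast
    then have n2: "\<forall>i\<in>{1..A}. \<forall>k. psum tau X0 i k \<omega> \<le> ?t" by (auto simp: not_less)
    show ?thesis unfolding h1 using n1 n2 by blast
  next
    case False
    have h1: "jump_time tau X0 A (Suc n) \<omega> = Min ((\<lambda>i. nxt tau X0 i ?t \<omega>) ` ?G)"
      using eq unfolding if_not_P[OF False] .
    have fin: "finite ?G" by auto
    have h2: "(Min ((\<lambda>i. nxt tau X0 i ?t \<omega>) ` ?G) \<le> c) \<longleftrightarrow> (\<exists>i\<in>?G. nxt tau X0 i ?t \<omega> \<le> c)"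
      using fin False by (subst Min_le_iff) auto
    have n3: "\<not> (\<forall>i\<in>{1..A}. \<forall>k. psum tau X0 i k \<omega> \<le> ?t)" using False by (auto simp: not_less)
    show ?thesis unfolding h1 h2 using n3 by blast
  qed
qed




locale urn_model = prob_space M for M :: "'a measure" +
  fixes tau :: "nat \<Rightarrow> nat \<Rightarrow> 'a \<Rightarrow> real" and F :: "nat \<Rightarrow> nat \<Rightarrow> real"
    and X0 :: "nat \<Rightarrow> nat" and A :: nat
  assumes A2: "A \<ge> 2"
    and F_pos: "\<And>i k. i \<in> {1..A} \<Longrightarrow> k \<ge> 1 \<Longrightarrow> F i k > 0"
    and X0_pos: "\<And>i. i \<in> {1..A} \<Longrightarrow> X0 i \<ge> 1"
    and indep: "indep_vars (\<lambda>_. borel) (\<lambda>(i, k). tau i k) {(i, k). i \<in> {1..A} \<and> X0 i \<le> k}"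
    and expo: "\<And>i k. i \<in> {1..A} \<Longrightarrow> X0 i \<le> k \<Longrightarrow> distributed M lborel (tau i k) (exponential_density (F i k))"
begin

abbreviation "Idx \<equiv> {(i, k). i \<in> {1..A} \<and> X0 i \<le> k}"

lemma F_pos': "i \<in> {1..A} \<Longrightarrow> X0 i \<le> k \<Longrightarrow> F i k > 0"
  using F_pos X0_pos by (meson order.trans)

lemma tau_meas: "i \<in> {1..A} \<Longrightarrow> X0 i \<le> k \<Longrightarrow> tau i k \<in> borel_measurable M"
  using expo distributed_measurable by (metis measurable_lborel1)

lemma psum_meas: "i \<in> {1..A} \<Longrightarrow> psum tau X0 i k \<in> borel_measurable M"
  unfolding psum_def by (intro borel_measurable_sum) (auto intro: tau_meas)

lemma nxt_meas:
  assumes i: "i \<in> {1..A}" and t[measurable]: "t \<in> borel_measurable M"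
  shows "(\<lambda>\<omega>. nxt tau X0 i (t \<omega>) \<omega>) \<in> borel_measurable M"
proof -
  note [measurable] = psum_meas[OF i]
  have L: "(\<lambda>\<omega>. LEAST k. psum tau X0 i k \<omega> > t \<omega>) \<in> measurable M (count_space UNIV)"
    by measurable
  show ?thesis unfolding nxt_def
    by (rule measurable_compose_countable[OF _ L]) (rule psum_meas[OF i])
qed

lemma jt_meas: "(\<lambda>\<omega>. jump_time tau X0 A n \<omega>) \<in> borel_measurable M"
proof (induction n)
  case 0
  then show ?case by simp
next
  case (Suc n)
  let ?t = "\<lambda>\<omega>. jump_time tau X0 A n \<omega>"
  note [measurable] = Suc.IH
  have nm: "\<And>i. i \<in> {1..A} \<Longrightarrow> (\<lambda>\<omega>. nxt tau X0 i (?t \<omega>) \<omega>) \<in> borel_measurable M"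
    using nxt_meas Suc.IH by blast
  have pm: "\<And>i k. i \<in> {1..A} \<Longrightarrow> psum tau X0 i k \<in> borel_measurable M" by (rule psum_meas)
  show ?case
  proof (subst borel_measurable_iff_le, intro allI)
    fix c :: real
    have eq: "{\<omega> \<in> space M. jump_time tau X0 A (Suc n) \<omega> \<le> c} =
      {\<omega> \<in> space M. ((\<forall>i\<in>{1..A}. \<forall>k. psum tau X0 i k \<omega> \<le> ?t \<omega>) \<and> Inf {} \<le> c) \<or>
          (\<exists>i\<in>{1..A}. (\<exists>k. psum tau X0 i k \<omega> > ?t \<omega>) \<and> nxt tau X0 i (?t \<omega>) \<omega> \<le> c)}"
      by (rule Collect_cong) (simp only: jt_le_iff)
    have s1: "{\<omega> \<in> space M. (\<forall>i\<in>{1..A}. \<forall>k. psum tau X0 i k \<omega> \<le> ?t \<omega>)} \<in> sets M"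
    proof (intro sets.sets_Collect_finite_All)
      fix i assume i: "i \<in> {1..A}"
      note [measurable] = pm[OF i]
      show "{\<omega> \<in> space M. \<forall>k. psum tau X0 i k \<omega> \<le> ?t \<omega>} \<in> sets M" by measurable
    qed auto
    have s2: "{\<omega> \<in> space M. (\<exists>i\<in>{1..A}. (\<exists>k. psum tau X0 i k \<omega> > ?t \<omega>) \<and> nxt tau X0 i (?t \<omega>) \<omega> \<le> c)} \<in> sets M"
    proof (intro sets.sets_Collect_finite_Ex)
      fix i assume i: "i \<in> {1..A}"
      note [measurable] = pm[OF i] nm[OF i]
      show "{\<omega> \<in> space M. (\<exists>k. psum tau X0 i k \<omega> > ?t \<omega>) \<and> nxt tau X0 i (?t \<omega>) \<omega> \<le> c} \<in> sets M" by measurable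
    qed auto
    have "{\<omega> \<in> space M. ((\<forall>i\<in>{1..A}. \<forall>k. psum tau X0 i k \<omega> \<le> ?t \<omega>) \<and> Inf {} \<le> c) \<or>
          (\<exists>i\<in>{1..A}. (\<exists>k. psum tau X0 i k \<omega> > ?t \<omega>) \<and> nxt tau X0 i (?t \<omega>) \<omega> \<le> c)}
       = ({\<omega> \<in> space M. (\<forall>i\<in>{1..A}. \<forall>k. psum tau X0 i k \<omega> \<le> ?t \<omega>)} \<inter> {\<omega>\<in>space M. Inf {} \<le> c})
         \<union> {\<omega> \<in> space M. (\<exists>i\<in>{1..A}. (\<exists>k. psum tau X0 i k \<omega> > ?t \<omega>) \<and> nxt tau X0 i (?t \<omega>) \<omega> \<le> c)}"
      by blast
    also have "\<dots> \<in> sets M" using s1 s2 by (intro sets.Un sets.Int) auto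
    finally show "{\<omega> \<in> space M. jump_time tau X0 A (Suc n) \<omega> \<le> c} \<in> sets M" unfolding eq .
  qed
qed

lemma E_sets: "{\<omega> \<in> space M. enat x < urn_limit tau X0 A 1 \<omega>} \<in> sets M"
proof -
  have one: "1 \<in> {1..A}" using A2 by auto
  note [measurable] = psum_meas[OF one] jt_meas
  have "{\<omega> \<in> space M. enat x < urn_limit tau X0 A 1 \<omega>} =
        {\<omega> \<in> space M. \<exists>n. \<forall>k\<le>x. psum tau X0 1 k \<omega> \<le> jump_time tau X0 A n \<omega>}"
    by (rule Collect_cong) (simp only: urn_limit_gt_iff)
  also have "\<dots> \<in> sets M" by measurable
  finally show ?thesis .
qed

lemma AE_pos: "AE \<omega> in M. posw tau X0 A \<omega>"
proof -
  have "AE \<omega> in M. tau i k \<omega> > 0" if i: "i \<in> {1..A}" and k: "X0 i \<le> k" for i k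
  proof -
    have Fp: "F i k > 0" using F_pos' i k .
    have "prob {\<omega>\<in>space M. 0 < tau i k \<omega>} = exp (- 0 * F i k)"
      using exponential_distributedD_gt[OF expo[OF i k] _ Fp, of 0] by simp
    then have "prob {\<omega>\<in>space M. 0 < tau i k \<omega>} = 1" by simp
    from AE_prob_1[OF this] show ?thesis by auto
  qed
  then have "AE \<omega> in M. \<forall>i\<in>{1..A}. \<forall>k. X0 i \<le> k \<longrightarrow> tau i k \<omega> > 0"
    by (intro AE_finite_allI) (auto simp: AE_all_countable)
  then show ?thesis unfolding posw_def by (auto simp: le_imp_less_Suc)
qed

end


context urn_model begin

lemma prod_expect:
  assumes J: "finite J" "J \<subseteq> Idx"
    and g: "\<And>j. j \<in> J \<Longrightarrow> g j \<in> borel_measurable borel"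
    and int: "\<And>j. j \<in> J \<Longrightarrow> integrable M (\<lambda>\<omega>. g j (tau (fst j) (snd j) \<omega>))"
  shows "integrable M (\<lambda>\<omega>. \<Prod>j\<in>J. g j (tau (fst j) (snd j) \<omega>) :: real)"
    and "(\<integral>\<omega>. (\<Prod>j\<in>J. g j (tau (fst j) (snd j) \<omega>)) \<partial>M) = (\<Prod>j\<in>J. \<integral>\<omega>. g j (tau (fst j) (snd j) \<omega>) \<partial>M)"
proof -
  have ind: "indep_vars (\<lambda>_. borel) (\<lambda>j \<omega>. g j ((\<lambda>(i,k). tau i k) j \<omega>)) J"
    by (rule indep_vars_compose2[where N="\<lambda>_. borel", OF indep_vars_subset[OF indep J(2)]]) (use g in auto)
  have ind2: "indep_vars (\<lambda>_. borel) (\<lambda>j \<omega>. g j (tau (fst j) (snd j) \<omega>)) J"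
    using ind by (simp add: case_prod_beta)
  show "integrable M (\<lambda>\<omega>. \<Prod>j\<in>J. g j (tau (fst j) (snd j) \<omega>) :: real)"
    by (rule indep_vars_integrable[OF J(1) ind2 int])
  show "(\<integral>\<omega>. (\<Prod>j\<in>J. g j (tau (fst j) (snd j) \<omega>)) \<partial>M) = (\<Prod>j\<in>J. \<integral>\<omega>. g j (tau (fst j) (snd j) \<omega>) \<partial>M)"
    by (rule indep_vars_lebesgue_integral[OF J(1) ind2 int])
qed

lemma expdens_int1:
  assumes "0 < m"
  shows "(\<integral>\<^sup>+x. ennreal (exponential_density m x) \<partial>lborel) = 1"
proof -
  interpret P: prob_space "density lborel (\<lambda>x. ennreal (exponential_density m x))"
    by (rule prob_space_exponential_density) fact
  have "emeasure (density lborel (\<lambda>x. ennreal (exponential_density m x))) UNIV = 1"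
    using P.emeasure_space_1 by simp
  then show ?thesis by (subst (asm) emeasure_density) auto
qed

lemma mgf:
  assumes i: "i \<in> {1..A}" and k: "X0 i \<le> k" and c: "c < F i k"
  shows "integrable M (\<lambda>\<omega>. exp (c * tau i k \<omega>))"
    and "(\<integral>\<omega>. exp (c * tau i k \<omega>) \<partial>M) = F i k / (F i k - c)"
proof -
  define l where "l = F i k"
  define m where "m = l - c"
  have l: "l > 0" unfolding l_def using F_pos' i k .
  have m: "m > 0" unfolding m_def l_def using c by simp
  note D = expo[OF i k, folded l_def]
  note [measurable] = tau_meas[OF i k]
  have "(\<integral>\<^sup>+\<omega>. ennreal (exp (c * tau i k \<omega>)) \<partial>M) =
        (\<integral>\<^sup>+x. ennreal (exponential_density l x) * ennreal (exp (c * x)) \<partial>lborel)"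
    using distributed_nn_integral[OF D, of "\<lambda>x. ennreal (exp (c * x))"] by simp
  also have "\<dots> = (\<integral>\<^sup>+x. ennreal (l / m) * ennreal (exponential_density m x) \<partial>lborel)"
  proof (intro nn_integral_cong)
    fix x :: real
    show "ennreal (exponential_density l x) * ennreal (exp (c * x)) =
          ennreal (l / m) * ennreal (exponential_density m x)"
    proof (cases "x < 0")
      case True then show ?thesis by (simp add: exponential_density_def)
    next
      case False
      have e: "exp (- x * m) = exp (- x * l) * exp (c * x)"
        unfolding m_def by (simp add: exp_add[symmetric] algebra_simps)
      have "l * exp (- x * l) * exp (c * x) = l / m * (m * exp (- x * m))"
        using m unfolding e by (simp add: field_simps)
      then show ?thesis using False l m
        by (simp add: exponential_density_def ennreal_mult[symmetric])
    qed
  qed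
  also have "\<dots> = ennreal (l / m) * (\<integral>\<^sup>+x. ennreal (exponential_density m x) \<partial>lborel)"
    by (rule nn_integral_cmult) measurable
  also have "\<dots> = ennreal (l / m)" using expdens_int1[OF m] by simp
  finally have nn: "(\<integral>\<^sup>+\<omega>. ennreal (exp (c * tau i k \<omega>)) \<partial>M) = ennreal (l / m)" .
  show int: "integrable M (\<lambda>\<omega>. exp (c * tau i k \<omega>))"
    by (rule integrableI_nn_integral_finite[OF _ _ nn]) auto
  have "(\<integral>\<omega>. exp (c * tau i k \<omega>) \<partial>M) = enn2real (ennreal (l / m))"
    by (subst integral_eq_nn_integral) (auto simp: nn)
  also have "\<dots> = l / m" using l m by simp
  finally show "(\<integral>\<omega>. exp (c * tau i k \<omega>) \<partial>M) = F i k / (F i k - c)" unfolding m_def l_def .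
qed

lemma tailp:
  assumes i: "i \<in> {1..A}" and k: "X0 i \<le> k" and a: "0 \<le> a"
  shows "integrable M (\<lambda>\<omega>. indicator {a<..} (tau i k \<omega>) :: real)"
    and "(\<integral>\<omega>. indicator {a<..} (tau i k \<omega>) \<partial>M) = exp (- a * F i k)"
proof -
  note [measurable] = tau_meas[OF i k]
  show "integrable M (\<lambda>\<omega>. indicator {a<..} (tau i k \<omega>) :: real)"
    by (rule integrable_const_bound[where B=1]) (auto simp: indicator_def)
  have "(\<integral>\<omega>. indicator {a<..} (tau i k \<omega>) \<partial>M) = (\<integral>\<omega>. indicator {\<omega>\<in>space M. a < tau i k \<omega>} \<omega> \<partial>M)"
    by (intro Bochner_Integration.integral_cong) (auto simp: indicator_def)
  also have "\<dots> = prob {\<omega>\<in>space M. a < tau i k \<omega>}" by simp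
  also have "\<dots> = exp (- a * F i k)"
    by (rule exponential_distributedD_gt[OF expo[OF i k] a F_pos'[OF i k]])
  finally show "(\<integral>\<omega>. indicator {a<..} (tau i k \<omega>) \<partial>M) = exp (- a * F i k)" .
qed

end


lemma asym_from_bounds:
  fixes f g :: "nat \<Rightarrow> real"
  assumes g: "filterlim g at_top sequentially"
    and b: "\<And>e. e > 0 \<Longrightarrow> \<exists>C. eventually (\<lambda>x. \<bar>f x - g x\<bar> \<le> e * g x + C) sequentially"
  shows "f \<sim>[at_top] g"
proof (rule asymp_equivI')
  show "((\<lambda>x. f x / g x) \<longlongrightarrow> 1) at_top"
  proof (rule tendstoI)
    fix e :: real assume e: "e > 0"
    obtain C where C: "eventually (\<lambda>x. \<bar>f x - g x\<bar> \<le> e/2 * g x + C) sequentially"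
      using b[of "e/2"] e by auto
    have G: "eventually (\<lambda>x. g x \<ge> 2 * \<bar>C\<bar> / e + 1) sequentially"
      using g unfolding filterlim_at_top by blast
    show "eventually (\<lambda>x. dist (f x / g x) 1 < e) at_top"
      using C G
    proof eventually_elim
      case (elim x)
      have gp: "g x > 0" using elim(2) e by (smt (verit) divide_nonneg_pos)
      have "2 * \<bar>C\<bar> / e < g x" using elim(2) by simp
      then have "2 * \<bar>C\<bar> < e * g x" using e by (simp add: field_simps)
      then have "\<bar>f x - g x\<bar> < e * g x" using elim(1) by linarith
      then have "\<bar>f x - g x\<bar> / g x < e" using gp by (simp add: field_simps)
      moreover have "dist (f x / g x) 1 = \<bar>f x - g x\<bar> / g x"
        using gp by (simp add: dist_real_def field_simps abs_div)
      ultimately show ?case by simp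
    qed
  qed
qed

lemma div_partial:
  fixes h :: "nat \<Rightarrow> real"
  assumes hp: "\<And>k. k \<ge> 1 \<Longrightarrow> h k > 0" and ns: "\<not> summable (\<lambda>k. h (Suc k))" and X: "X \<ge> 1"
  shows "filterlim (\<lambda>n. \<Sum>k\<in>{X..n}. h k) at_top sequentially"
proof -
  define P where "P n = (\<Sum>k<n. h (Suc k))" for n
  have unb: "\<exists>n. P n > B" for B
  proof (rule ccontr)
    assume "\<not> ?thesis"
    then have "\<And>n. (\<Sum>k<n. h (Suc k)) \<le> B" unfolding P_def by (simp add: not_less)
    then have "summable (\<lambda>k. h (Suc k))"
      by (intro summableI_nonneg_bounded[where x=B]) (auto intro: less_imp_le hp[of "Suc _", simplified])
    then show False using ns by simp
  qed
  have Pmono: "P n \<le> P m" if "n \<le> m" for n m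
    unfolding P_def using that by (intro sum_mono2) (auto intro: less_imp_le hp[of "Suc _", simplified])
  define C0 where "C0 = (\<Sum>k\<in>{1..<X}. h k)"
  have split: "(\<Sum>k\<in>{X..m}. h k) = P m - C0" if "m \<ge> X" for m
  proof -
    have "P m = (\<Sum>k\<in>{1..m}. h k)" unfolding P_def by (simp add: sum.atLeast1_atMost_eq)
    also have "{1..m} = {1..<X} \<union> {X..m}" using X that by auto
    also have "(\<Sum>k\<in>{1..<X} \<union> {X..m}. h k) = C0 + (\<Sum>k\<in>{X..m}. h k)"
      unfolding C0_def by (subst sum.union_disjoint) auto
    finally show ?thesis by simp
  qed
  show ?thesis unfolding filterlim_at_top
  proof
    fix Z
    obtain n where n: "P n > Z + C0" using unb by blast
    show "eventually (\<lambda>m. Z \<le> (\<Sum>k\<in>{X..m}. h k)) sequentially"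
      unfolding eventually_sequentially
    proof (intro exI[of _ "max n X"] allI impI)
      fix m assume "max n X \<le> m"
      then have "m \<ge> X" "m \<ge> n" by auto
      then show "Z \<le> (\<Sum>k\<in>{X..m}. h k)" using split[of m] Pmono[of n m] n by simp
    qed
  qed
qed

lemma prod_ratio_le_exp:
  fixes F :: "nat \<Rightarrow> real"
  assumes "finite S" "\<And>k. k \<in> S \<Longrightarrow> 0 \<le> t \<and> t < F k"
  shows "(\<Prod>k\<in>S. F k / (F k - t)) \<le> exp (\<Sum>k\<in>S. t / (F k - t))"
proof -
  have "(\<Prod>k\<in>S. F k / (F k - t)) \<le> (\<Prod>k\<in>S. exp (t / (F k - t)))"
  proof (rule prod_mono)
    fix k assume k: "k \<in> S"
    have t: "0 \<le> t" "t < F k" using assms(2)[OF k] by auto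
    have "F k / (F k - t) = 1 + t / (F k - t)" using t by (simp add: field_simps)
    also have "\<dots> \<le> exp (t / (F k - t))" by (rule exp_ge_add_one_self)
    finally show "0 \<le> F k / (F k - t) \<and> F k / (F k - t) \<le> exp (t / (F k - t))"
      using t by auto
  qed
  also have "\<dots> = exp (\<Sum>k\<in>S. t / (F k - t))" using assms(1) by (simp add: exp_sum)
  finally show ?thesis .
qed

lemma prod_one_plus_ge:
  fixes y :: "nat \<Rightarrow> real"
  assumes "finite S" "\<And>k. k \<in> S \<Longrightarrow> 0 \<le> y k"
  shows "1 + (\<Sum>k\<in>S. y k) \<le> (\<Prod>k\<in>S. 1 + y k)"
  using assms
proof (induction S rule: finite_induct)
  case empty then show ?case by simp
next
  case (insert x S)
  have yx: "0 \<le> y x" using insert by auto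
  have s: "0 \<le> (\<Sum>k\<in>S. y k)" using insert by (intro sum_nonneg) auto
  have ih: "1 + (\<Sum>k\<in>S. y k) \<le> (\<Prod>k\<in>S. 1 + y k)" using insert by auto
  have "1 + (\<Sum>k\<in>insert x S. y k) = 1 + y x + (\<Sum>k\<in>S. y k)" using insert by simp
  also have "\<dots> \<le> (1 + y x) * (1 + (\<Sum>k\<in>S. y k))" using yx s by (simp add: algebra_simps)
  also have "\<dots> \<le> (1 + y x) * (\<Prod>k\<in>S. 1 + y k)" using ih yx by (intro mult_left_mono) auto
  also have "\<dots> = (\<Prod>k\<in>insert x S. 1 + y k)" using insert by simp
  finally show ?case .
qed

lemma prod_ratio_plus_le:
  fixes F :: "nat \<Rightarrow> real"
  assumes "finite S" "\<And>k. k \<in> S \<Longrightarrow> 0 < F k" "t > 0"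
  shows "(\<Prod>k\<in>S. F k / (F k + t)) \<le> 1 / (1 + (\<Sum>k\<in>S. t / F k))"
proof -
  have pos: "0 < (\<Prod>k\<in>S. 1 + t / F k)" using assms
    by (intro prod_pos) (metis add_pos_pos divide_pos_pos zero_less_one)
  have "(\<Prod>k\<in>S. F k / (F k + t)) = (\<Prod>k\<in>S. 1 / (1 + t / F k))"
  proof (intro prod.cong refl)
    fix k assume "k \<in> S"
    then have Fk: "F k > 0" using assms by auto
    have "1 + t / F k = (F k + t) / F k" using Fk by (simp add: field_simps)
    then show "F k / (F k + t) = 1 / (1 + t / F k)" by simp
  qed
  also have "\<dots> = 1 / (\<Prod>k\<in>S. 1 + t / F k)" by (simp add: prod_dividef)
  also have "\<dots> \<le> 1 / (1 + (\<Sum>k\<in>S. t / F k))"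
  proof (rule divide_left_mono)
    show "1 + (\<Sum>k\<in>S. t / F k) \<le> (\<Prod>k\<in>S. 1 + t / F k)"
      using assms by (intro prod_one_plus_ge) (auto intro: less_imp_le)
    have "0 \<le> (\<Sum>k\<in>S. t / F k)" using assms by (intro sum_nonneg) (auto intro: less_imp_le)
    then show "0 < (\<Prod>k\<in>S. 1 + t / F k) * (1 + (\<Sum>k\<in>S. t / F k))" using pos by simp
  qed simp
  finally show ?thesis .
qed

lemma neg_ln_prod_ratio:
  fixes F :: "nat \<Rightarrow> real"
  assumes "finite S" "\<And>k. k \<in> S \<Longrightarrow> 0 < F k" "t \<ge> 0"
  shows "- ln (\<Prod>k\<in>S. F k / (F k + t)) = (\<Sum>k\<in>S. ln (1 + t / F k))"
proof -
  have "ln (\<Prod>k\<in>S. F k / (F k + t)) = (\<Sum>k\<in>S. ln (F k / (F k + t)))"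
  proof (rule ln_prod)
    fix i assume "i \<in> S"
    then have "F i / (F i + t) > 0" using assms by (intro divide_pos_pos add_pos_nonneg) auto
    then show "F i / (F i + t) \<noteq> 0" by (metis less_irrefl)
  qed (use assms in auto)
  also have "\<dots> = (\<Sum>k\<in>S. - ln (1 + t / F k))"
  proof (intro sum.cong refl)
    fix k assume k: "k \<in> S"
    have Fk: "F k > 0" using assms k by auto
    have "F k / (F k + t) = inverse (1 + t / F k)" using Fk assms(3) by (simp add: field_simps)
    then show "ln (F k / (F k + t)) = - ln (1 + t / F k)"
      using Fk assms(3) by (simp add: ln_inverse add_pos_nonneg)
  qed
  finally show ?thesis by (simp add: sum_negf)
qed



lemma prod_split:
  fixes f :: "nat \<Rightarrow> nat \<Rightarrow> real"
  assumes "finite S" "\<And>i. i \<in> S \<Longrightarrow> finite (B i)" "finite T" "i0 \<notin> S"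
  shows "(\<Prod>j\<in>Sigma S B \<union> {i0} \<times> T. f (fst j) (snd j)) = (\<Prod>i\<in>S. \<Prod>k\<in>B i. f i k) * (\<Prod>k\<in>T. f i0 k)"
proof -
  have d: "Sigma S B \<inter> {i0} \<times> T = {}" using assms(4) by auto
  have f1: "finite (Sigma S B)" using assms by auto
  have f2: "finite ({i0} \<times> T)" using assms by auto
  have "(\<Prod>j\<in>Sigma S B \<union> {i0} \<times> T. f (fst j) (snd j)) =
        (\<Prod>j\<in>Sigma S B. f (fst j) (snd j)) * (\<Prod>j\<in>{i0} \<times> T. f (fst j) (snd j))"
    by (rule prod.union_disjoint[OF f1 f2 d])
  also have "(\<Prod>j\<in>Sigma S B. f (fst j) (snd j)) = (\<Prod>i\<in>S. \<Prod>k\<in>B i. f i k)"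
    using assms(1,2) by (subst prod.Sigma) (auto simp: case_prod_beta)
  also have "(\<Prod>j\<in>{i0} \<times> T. f (fst j) (snd j)) = (\<Prod>k\<in>T. f i0 k)"
  proof -
    have "{i0} \<times> T = (\<lambda>k. (i0, k)) ` T" by auto
    moreover have "inj_on (\<lambda>k. (i0, k)) T" by (auto simp: inj_on_def)
    ultimately show ?thesis by (simp add: prod.reindex)
  qed
  finally show ?thesis .
qed

context urn_model begin

lemma prod_mgf:
  assumes J: "finite J" "J \<subseteq> Idx" and c: "\<And>j. j \<in> J \<Longrightarrow> cf j < F (fst j) (snd j)"
  shows "integrable M (\<lambda>\<omega>. \<Prod>j\<in>J. exp (cf j * tau (fst j) (snd j) \<omega>))"
    and "(\<integral>\<omega>. (\<Prod>j\<in>J. exp (cf j * tau (fst j) (snd j) \<omega>)) \<partial>M) =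
           (\<Prod>j\<in>J. F (fst j) (snd j) / (F (fst j) (snd j) - cf j))"
proof -
  have ik: "fst j \<in> {1..A}" "X0 (fst j) \<le> snd j" if "j \<in> J" for j using J(2) that by auto
  have int: "integrable M (\<lambda>\<omega>. (\<lambda>j y. exp (cf j * y)) j (tau (fst j) (snd j) \<omega>))" if "j \<in> J" for j
    using mgf(1)[OF ik[OF that] c[OF that]] by simp
  show "integrable M (\<lambda>\<omega>. \<Prod>j\<in>J. exp (cf j * tau (fst j) (snd j) \<omega>))"
    using prod_expect(1)[OF J, of "\<lambda>j y. exp (cf j * y)"] int by simp
  have "(\<integral>\<omega>. (\<Prod>j\<in>J. exp (cf j * tau (fst j) (snd j) \<omega>)) \<partial>M) =
         (\<Prod>j\<in>J. \<integral>\<omega>. exp (cf j * tau (fst j) (snd j) \<omega>) \<partial>M)"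
    using prod_expect(2)[OF J, of "\<lambda>j y. exp (cf j * y)"] int by simp
  also have "\<dots> = (\<Prod>j\<in>J. F (fst j) (snd j) / (F (fst j) (snd j) - cf j))"
    using mgf(2)[OF ik c] by (intro prod.cong refl) auto
  finally show "(\<integral>\<omega>. (\<Prod>j\<in>J. exp (cf j * tau (fst j) (snd j) \<omega>)) \<partial>M) =
           (\<Prod>j\<in>J. F (fst j) (snd j) / (F (fst j) (snd j) - cf j))" .
qed


lemma upper_prob:
  fixes \<theta> C :: "nat \<Rightarrow> real"
  assumes Ms: "Ms \<subseteq> {1..A}" "1 \<notin> Ms"
    and th: "\<And>i k. i \<in> Ms \<Longrightarrow> X0 i \<le> k \<Longrightarrow> 0 \<le> \<theta> i \<and> \<theta> i < F i k"
    and Cb: "\<And>i N. i \<in> Ms \<Longrightarrow> (\<Prod>k\<in>{X0 i..N}. F i k / (F i k - \<theta> i)) \<le> C i"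
  shows "prob {\<omega> \<in> space M. enat x < urn_limit tau X0 A 1 \<omega>} \<le>
           (\<Prod>i\<in>Ms. C i) * (\<Prod>k\<in>{X0 1..x}. F 1 k / (F 1 k + (\<Sum>i\<in>Ms. \<theta> i)))"
proof -
  define \<Theta> where "\<Theta> = (\<Sum>i\<in>Ms. \<theta> i)"
  define B where "B = (\<Prod>i\<in>Ms. C i) * (\<Prod>k\<in>{X0 1..x}. F 1 k / (F 1 k + \<Theta>))"
  have finMs: "finite Ms" using Ms(1) finite_subset by blast
  have one: "1 \<in> {1..A}" using A2 by auto
  have A1: "A \<ge> 1" using A2 by simp
  have iA: "i \<in> {1..A}" if "i \<in> Ms" for i using Ms(1) that by auto
  have th0: "0 \<le> \<theta> i" if "i \<in> Ms" for i using th[OF that order.refl] by simp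
  have \<Theta>0: "0 \<le> \<Theta>" unfolding \<Theta>_def using th0 by (simp add: sum_nonneg)
  define W where "W N = {\<omega>\<in>space M. \<forall>i\<in>Ms. psum tau X0 1 x \<omega> < psum tau X0 i N \<omega>}" for N
  define V where "V N = {\<omega>\<in>space M. \<forall>i\<in>Ms. \<exists>N'\<le>N. psum tau X0 1 x \<omega> < psum tau X0 i N' \<omega>}" for N
  have Wm: "W N \<in> sets M" for N
    unfolding W_def
  proof (intro sets.sets_Collect_finite_All)
    fix i assume i: "i \<in> Ms"
    note [measurable] = psum_meas[OF one] psum_meas[OF iA[OF i]]
    show "{\<omega>\<in>space M. psum tau X0 1 x \<omega> < psum tau X0 i N \<omega>} \<in> sets M" by measurable
  qed (rule finMs)
  have Vm: "V N \<in> sets M" for N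
    unfolding V_def
  proof (intro sets.sets_Collect_finite_All)
    fix i assume i: "i \<in> Ms"
    note [measurable] = psum_meas[OF one] psum_meas[OF iA[OF i]]
    show "{\<omega>\<in>space M. \<exists>N'\<le>N. psum tau X0 1 x \<omega> < psum tau X0 i N' \<omega>} \<in> sets M" by measurable
  qed (rule finMs)
  have WB: "prob (W N) \<le> B" for N
  proof -
    define J where "J = Sigma Ms (\<lambda>i. {X0 i..N}) \<union> {1} \<times> {X0 1..x}"
    define c where "c i = (if i = 1 then - \<Theta> else \<theta> i)" for i
    have finJ: "finite J" unfolding J_def using finMs by auto
    have JI: "J \<subseteq> Idx" unfolding J_def using Ms(1) one by auto
    have cJ: "c (fst j) < F (fst j) (snd j)" if "j \<in> J" for j
    proof (cases "fst j = 1")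
      case True
      then have "snd j \<ge> X0 1" using that Ms(2) unfolding J_def by auto
      then have "F 1 (snd j) > 0" using F_pos'[OF one] by auto
      then show ?thesis using True \<Theta>0 unfolding c_def by simp
    next
      case False
      then have "fst j \<in> Ms" "X0 (fst j) \<le> snd j" using that unfolding J_def by auto
      then show ?thesis using th False unfolding c_def by auto
    qed
    note I = prod_mgf[OF finJ JI, of "\<lambda>j. c (fst j)", OF cJ]
    have pw: "indicator (W N) \<omega> \<le> (\<Prod>j\<in>J. exp (c (fst j) * tau (fst j) (snd j) \<omega>))" for \<omega>
    proof -
      let ?p1 = "psum tau X0 1 x \<omega>"
      have "(\<Prod>j\<in>J. exp (c (fst j) * tau (fst j) (snd j) \<omega>)) =
            (\<Prod>i\<in>Ms. \<Prod>k\<in>{X0 i..N}. exp (c i * tau i k \<omega>)) * (\<Prod>k\<in>{X0 1..x}. exp (c 1 * tau 1 k \<omega>))"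
        unfolding J_def by (rule prod_split) (use finMs Ms(2) in auto)
      also have "(\<Prod>i\<in>Ms. \<Prod>k\<in>{X0 i..N}. exp (c i * tau i k \<omega>)) = (\<Prod>i\<in>Ms. exp (\<theta> i * psum tau X0 i N \<omega>))"
      proof (intro prod.cong refl)
        fix i assume i: "i \<in> Ms"
        then have "c i = \<theta> i" using Ms(2) unfolding c_def by auto
        then show "(\<Prod>k\<in>{X0 i..N}. exp (c i * tau i k \<omega>)) = exp (\<theta> i * psum tau X0 i N \<omega>)"
          unfolding psum_def by (simp add: exp_sum[symmetric] sum_distrib_left)
      qed
      also have "(\<Prod>k\<in>{X0 1..x}. exp (c 1 * tau 1 k \<omega>)) = exp (- \<Theta> * ?p1)"
        unfolding psum_def c_def by (simp add: exp_sum[symmetric] sum_distrib_left)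
      also have "exp (- \<Theta> * ?p1) = (\<Prod>i\<in>Ms. exp (- \<theta> i * ?p1))"
        unfolding \<Theta>_def using finMs by (simp add: exp_sum[symmetric] sum_distrib_right sum_negf)
      also have "(\<Prod>i\<in>Ms. exp (\<theta> i * psum tau X0 i N \<omega>)) * (\<Prod>i\<in>Ms. exp (- \<theta> i * ?p1)) =
                 (\<Prod>i\<in>Ms. exp (\<theta> i * (psum tau X0 i N \<omega> - ?p1)))"
        by (simp add: prod.distrib[symmetric] exp_add[symmetric] algebra_simps)
      finally have eq: "(\<Prod>j\<in>J. exp (c (fst j) * tau (fst j) (snd j) \<omega>)) = (\<Prod>i\<in>Ms. exp (\<theta> i * (psum tau X0 i N \<omega> - ?p1)))" .
      show ?thesis
      proof (cases "\<omega> \<in> W N")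
        case True
        have "1 \<le> (\<Prod>i\<in>Ms. exp (\<theta> i * (psum tau X0 i N \<omega> - ?p1)))"
        proof (rule prod_ge_1)
          fix i assume i: "i \<in> Ms"
          have "psum tau X0 i N \<omega> - ?p1 > 0" using True i unfolding W_def by auto
          then have "0 \<le> \<theta> i * (psum tau X0 i N \<omega> - ?p1)" using th0[OF i] by simp
          then show "1 \<le> exp (\<theta> i * (psum tau X0 i N \<omega> - ?p1))" by simp
        qed
        then show ?thesis using True eq by simp
      next
        case False
        then show ?thesis using eq by (simp add: prod_nonneg)
      qed
    qed
    have intW: "integrable M (indicator (W N) :: 'a \<Rightarrow> real)"
      using Wm by (intro integrable_const_bound[where B=1]) (auto simp: indicator_def)
    have "prob (W N) = (\<integral>\<omega>. indicator (W N) \<omega> \<partial>M)" using Wm by simp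
    also have "\<dots> \<le> (\<integral>\<omega>. (\<Prod>j\<in>J. exp (c (fst j) * tau (fst j) (snd j) \<omega>)) \<partial>M)"
      by (rule integral_mono[OF intW I(1) pw])
    also have "\<dots> = (\<Prod>j\<in>J. F (fst j) (snd j) / (F (fst j) (snd j) - c (fst j)))" by (rule I(2))
    also have "\<dots> = (\<Prod>i\<in>Ms. \<Prod>k\<in>{X0 i..N}. F i k / (F i k - c i)) * (\<Prod>k\<in>{X0 1..x}. F 1 k / (F 1 k - c 1))"
      unfolding J_def by (rule prod_split) (use finMs Ms(2) in auto)
    also have "(\<Prod>i\<in>Ms. \<Prod>k\<in>{X0 i..N}. F i k / (F i k - c i)) = (\<Prod>i\<in>Ms. \<Prod>k\<in>{X0 i..N}. F i k / (F i k - \<theta> i))"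
      using Ms(2) unfolding c_def by (intro prod.cong refl) auto
    also have "(\<Prod>k\<in>{X0 1..x}. F 1 k / (F 1 k - c 1)) = (\<Prod>k\<in>{X0 1..x}. F 1 k / (F 1 k + \<Theta>))"
      unfolding c_def by simp
    also have "(\<Prod>i\<in>Ms. \<Prod>k\<in>{X0 i..N}. F i k / (F i k - \<theta> i)) * (\<Prod>k\<in>{X0 1..x}. F 1 k / (F 1 k + \<Theta>)) \<le> B"
      unfolding B_def
    proof (rule mult_right_mono)
      show "(\<Prod>i\<in>Ms. \<Prod>k\<in>{X0 i..N}. F i k / (F i k - \<theta> i)) \<le> (\<Prod>i\<in>Ms. C i)"
      proof (rule prod_mono)
        fix i assume i: "i \<in> Ms"
        have "0 \<le> (\<Prod>k\<in>{X0 i..N}. F i k / (F i k - \<theta> i))"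
        proof (rule prod_nonneg)
          fix k assume k: "k \<in> {X0 i..N}"
          then have "0 < F i k" "\<theta> i < F i k" using F_pos'[OF iA[OF i]] th[OF i] by auto
          then show "0 \<le> F i k / (F i k - \<theta> i)" by simp
        qed
        then show "0 \<le> (\<Prod>k\<in>{X0 i..N}. F i k / (F i k - \<theta> i)) \<and> (\<Prod>k\<in>{X0 i..N}. F i k / (F i k - \<theta> i)) \<le> C i"
          using Cb[OF i] by simp
      qed
      show "0 \<le> (\<Prod>k\<in>{X0 1..x}. F 1 k / (F 1 k + \<Theta>))"
      proof (rule prod_nonneg)
        fix k assume "k \<in> {X0 1..x}"
        then have "0 < F 1 k" using F_pos'[OF one] by auto
        then show "0 \<le> F 1 k / (F 1 k + \<Theta>)" using \<Theta>0 by simp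
      qed
    qed
    finally show ?thesis .
  qed
  have VW: "prob (V N) \<le> prob (W N)" for N
  proof (rule finite_measure_mono_AE[OF _ Wm])
    show "AE \<omega> in M. \<omega> \<in> V N \<longrightarrow> \<omega> \<in> W N"
      using AE_pos
    proof eventually_elim
      case (elim \<omega>)
      show ?case
      proof
        assume "\<omega> \<in> V N"
        then have "\<omega> \<in> space M" "\<forall>i\<in>Ms. \<exists>N'\<le>N. psum tau X0 1 x \<omega> < psum tau X0 i N' \<omega>"
          unfolding V_def by auto
        moreover have "psum tau X0 i N' \<omega> \<le> psum tau X0 i N \<omega>" if "i \<in> Ms" "N' \<le> N" for i N'
          using psum_mono[OF elim iA[OF that(1)] that(2)] .
        ultimately show "\<omega> \<in> W N" unfolding W_def by (fastforce intro: less_le_trans)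
      qed
    qed
  qed
  have incV: "incseq V"
    unfolding incseq_def V_def by (auto intro: order.trans)
  have lim: "(\<lambda>N. prob (V N)) \<longlonglongrightarrow> prob (\<Union>N. V N)"
    by (rule finite_Lim_measure_incseq) (use Vm incV in auto)
  have UB: "prob (\<Union>N. V N) \<le> B"
    by (rule LIMSEQ_le_const2[OF lim]) (use VW WB in \<open>auto intro: order.trans\<close>)
  have "prob {\<omega> \<in> space M. enat x < urn_limit tau X0 A 1 \<omega>} \<le> prob (\<Union>N. V N)"
  proof (rule finite_measure_mono_AE)
    show "(\<Union>N. V N) \<in> sets M" using Vm by auto
    show "AE \<omega> in M. \<omega> \<in> {\<omega> \<in> space M. enat x < urn_limit tau X0 A 1 \<omega>} \<longrightarrow> \<omega> \<in> (\<Union>N. V N)"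
      using AE_pos
    proof eventually_elim
      case (elim \<omega>)
      show ?case
      proof
        assume "\<omega> \<in> {\<omega> \<in> space M. enat x < urn_limit tau X0 A 1 \<omega>}"
        then have sp: "\<omega> \<in> space M" and E: "enat x < urn_limit tau X0 A 1 \<omega>" by auto
        have "\<forall>i\<in>Ms. \<exists>k. psum tau X0 1 x \<omega> < psum tau X0 i k \<omega>"
          using upper_path[OF elim A1 E] iA by blast
        then obtain kk where kk: "\<forall>i\<in>Ms. psum tau X0 1 x \<omega> < psum tau X0 i (kk i) \<omega>"
          by metis
        have "kk i \<le> (\<Sum>i\<in>Ms. kk i)" if "i \<in> Ms" for i using finMs that by (intro member_le_sum) auto
        then have "\<omega> \<in> V (\<Sum>i\<in>Ms. kk i)" unfolding V_def using sp kk by blast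
        then show "\<omega> \<in> (\<Union>N. V N)" by blast
      qed
    qed
  qed
  then show ?thesis using UB unfolding B_def \<Theta>_def by simp
qed


lemma Yexp:
  assumes Ms: "Ms \<subseteq> {1..A}" and i0: "i0 \<in> {1..A}" "i0 \<notin> Ms" and a: "0 \<le> a"
    and c: "\<And>k. X0 i0 \<le> k \<Longrightarrow> c < F i0 k"
  shows "integrable M (\<lambda>\<omega>. (\<Prod>i\<in>Ms. indicator {a<..} (tau i (X0 i) \<omega>)) * exp (c * psum tau X0 i0 n \<omega>) :: real)"
    and "(\<integral>\<omega>. (\<Prod>i\<in>Ms. indicator {a<..} (tau i (X0 i) \<omega>)) * exp (c * psum tau X0 i0 n \<omega>) \<partial>M) =
           exp (- a * (\<Sum>i\<in>Ms. F i (X0 i))) * (\<Prod>k\<in>{X0 i0..n}. F i0 k / (F i0 k - c))"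
proof -
  have finMs: "finite Ms" using Ms(1) finite_subset by blast
  define J where "J = Sigma Ms (\<lambda>i. {X0 i}) \<union> {i0} \<times> {X0 i0..n}"
  define g :: "nat \<times> nat \<Rightarrow> real \<Rightarrow> real" where
    "g j = (if fst j \<in> Ms then indicator {a<..} else (\<lambda>y. exp (c * y)))" for j
  have finJ: "finite J" unfolding J_def using finMs by auto
  have JI: "J \<subseteq> Idx" unfolding J_def using Ms i0 by auto
  have gm: "g j \<in> borel_measurable borel" for j unfolding g_def by auto
  have ik: "fst j \<in> {1..A}" "X0 (fst j) \<le> snd j" if "j \<in> J" for j using JI that by auto
  have gint: "integrable M (\<lambda>\<omega>. g j (tau (fst j) (snd j) \<omega>))" if j: "j \<in> J" for j
  proof (cases "fst j \<in> Ms")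
    case True then show ?thesis unfolding g_def using tailp(1)[OF ik[OF j] a] by simp
  next
    case False
    then have "fst j = i0" using j unfolding J_def by auto
    then have "c < F (fst j) (snd j)" using c ik[OF j] by auto
    then show ?thesis unfolding g_def using mgf(1)[OF ik[OF j]] False by simp
  qed
  have pw: "(\<Prod>j\<in>J. g j (tau (fst j) (snd j) \<omega>)) =
            (\<Prod>i\<in>Ms. indicator {a<..} (tau i (X0 i) \<omega>)) * exp (c * psum tau X0 i0 n \<omega>)" for \<omega>
  proof -
    have "(\<Prod>j\<in>J. g j (tau (fst j) (snd j) \<omega>)) =
          (\<Prod>i\<in>Ms. \<Prod>k\<in>{X0 i}. g (i, k) (tau i k \<omega>)) * (\<Prod>k\<in>{X0 i0..n}. g (i0, k) (tau i0 k \<omega>))"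
      unfolding J_def using prod_split[of Ms "\<lambda>i. {X0 i}" "{X0 i0..n}" i0 "\<lambda>i k. g (i, k) (tau i k \<omega>)"] finMs i0(2)
      by simp
    also have "\<dots> = (\<Prod>i\<in>Ms. indicator {a<..} (tau i (X0 i) \<omega>)) * (\<Prod>k\<in>{X0 i0..n}. exp (c * tau i0 k \<omega>))"
      unfolding g_def using i0(2) by simp
    also have "(\<Prod>k\<in>{X0 i0..n}. exp (c * tau i0 k \<omega>)) = exp (c * psum tau X0 i0 n \<omega>)"
      unfolding psum_def by (simp add: exp_sum[symmetric] sum_distrib_left)
    finally show ?thesis .
  qed
  show "integrable M (\<lambda>\<omega>. (\<Prod>i\<in>Ms. indicator {a<..} (tau i (X0 i) \<omega>)) * exp (c * psum tau X0 i0 n \<omega>) :: real)"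
    using prod_expect(1)[OF finJ JI gm gint] unfolding pw .
  have "(\<integral>\<omega>. (\<Prod>i\<in>Ms. indicator {a<..} (tau i (X0 i) \<omega>)) * exp (c * psum tau X0 i0 n \<omega>) \<partial>M) =
        (\<Prod>j\<in>J. \<integral>\<omega>. g j (tau (fst j) (snd j) \<omega>) \<partial>M)"
    using prod_expect(2)[OF finJ JI gm gint] unfolding pw .
  also have "\<dots> = (\<Prod>i\<in>Ms. \<Prod>k\<in>{X0 i}. \<integral>\<omega>. g (i, k) (tau i k \<omega>) \<partial>M) * (\<Prod>k\<in>{X0 i0..n}. \<integral>\<omega>. g (i0, k) (tau i0 k \<omega>) \<partial>M)"
    unfolding J_def using prod_split[of Ms "\<lambda>i. {X0 i}" "{X0 i0..n}" i0 "\<lambda>i k. \<integral>\<omega>. g (i, k) (tau i k \<omega>) \<partial>M"] finMs i0(2)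
    by simp
  also have "(\<Prod>i\<in>Ms. \<Prod>k\<in>{X0 i}. \<integral>\<omega>. g (i, k) (tau i k \<omega>) \<partial>M) = (\<Prod>i\<in>Ms. exp (- a * F i (X0 i)))"
  proof (intro prod.cong refl)
    fix i assume i: "i \<in> Ms"
    then have "i \<in> {1..A}" using Ms by auto
    then show "(\<Prod>k\<in>{X0 i}. \<integral>\<omega>. g (i, k) (tau i k \<omega>) \<partial>M) = exp (- a * F i (X0 i))"
      unfolding g_def using i tailp(2)[OF _ order.refl a] by simp
  qed
  also have "\<dots> = exp (- a * (\<Sum>i\<in>Ms. F i (X0 i)))"
    using finMs by (simp add: exp_sum[symmetric] sum_distrib_left sum_negf)
  also have "(\<Prod>k\<in>{X0 i0..n}. \<integral>\<omega>. g (i0, k) (tau i0 k \<omega>) \<partial>M) = (\<Prod>k\<in>{X0 i0..n}. F i0 k / (F i0 k - c))"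
  proof (intro prod.cong refl)
    fix k assume "k \<in> {X0 i0..n}"
    then have k: "X0 i0 \<le> k" by simp
    show "(\<integral>\<omega>. g (i0, k) (tau i0 k \<omega>) \<partial>M) = F i0 k / (F i0 k - c)"
      unfolding g_def using i0(2) mgf(2)[OF i0(1) k c[OF k]] by simp
  qed
  finally show "(\<integral>\<omega>. (\<Prod>i\<in>Ms. indicator {a<..} (tau i (X0 i) \<omega>)) * exp (c * psum tau X0 i0 n \<omega>) \<partial>M) =
           exp (- a * (\<Sum>i\<in>Ms. F i (X0 i))) * (\<Prod>k\<in>{X0 i0..n}. F i0 k / (F i0 k - c))" .
qed


lemma lower_prob:
  assumes Ms: "Ms \<subseteq> {1..A}" "1 \<notin> Ms" and a: "0 \<le> a"
    and t0: "0 < \<theta>0" "\<And>k. X0 1 \<le> k \<Longrightarrow> \<theta>0 < F 1 k"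
  shows "exp (- a * (\<Sum>i\<in>Ms. F i (X0 i))) *
           (1 - exp (- \<theta>0 * a) * (\<Prod>k\<in>{X0 1..x}. F 1 k / (F 1 k - \<theta>0))
              - (\<Sum>j\<in>{1..A} - Ms - {1}. exp a * (\<Prod>k\<in>{X0 j..K}. F j k / (F j k + 1))))
         \<le> prob {\<omega> \<in> space M. enat x < urn_limit tau X0 A 1 \<omega>}"
proof -
  define d where "d = (\<Sum>i\<in>Ms. F i (X0 i))"
  define Jn where "Jn = {1..A} - Ms - {1}"
  have finMs: "finite Ms" using Ms(1) finite_subset by blast
  have finJn: "finite Jn" unfolding Jn_def by auto
  have one: "1 \<in> {1..A}" using A2 by auto
  have A1: "A \<ge> 1" using A2 by simp
  have iA: "i \<in> {1..A}" if "i \<in> Ms" for i using Ms(1) that by auto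
  have jA: "j \<in> {1..A}" "j \<notin> Ms" if "j \<in> Jn" for j using that unfolding Jn_def by auto
  define Y where "Y \<omega> = (\<Prod>i\<in>Ms. indicator {a<..} (tau i (X0 i) \<omega>) :: real)" for \<omega>
  define L where "L = {\<omega>\<in>space M. (\<forall>i\<in>Ms. a < tau i (X0 i) \<omega>) \<and> psum tau X0 1 x \<omega> < a \<and> (\<forall>j\<in>Jn. a < psum tau X0 j K \<omega>)}"
  have Lm: "L \<in> sets M"
  proof -
    have s1: "{\<omega>\<in>space M. \<forall>i\<in>Ms. a < tau i (X0 i) \<omega>} \<in> sets M"
    proof (intro sets.sets_Collect_finite_All)
      fix i assume i: "i \<in> Ms"
      note [measurable] = tau_meas[OF iA[OF i] order.refl]
      show "{\<omega>\<in>space M. a < tau i (X0 i) \<omega>} \<in> sets M" by measurable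
    qed (rule finMs)
    have s2: "{\<omega>\<in>space M. psum tau X0 1 x \<omega> < a} \<in> sets M"
    proof -
      note [measurable] = psum_meas[OF one]
      show ?thesis by measurable
    qed
    have s3: "{\<omega>\<in>space M. \<forall>j\<in>Jn. a < psum tau X0 j K \<omega>} \<in> sets M"
    proof (intro sets.sets_Collect_finite_All)
      fix j assume j: "j \<in> Jn"
      note [measurable] = psum_meas[OF jA(1)[OF j]]
      show "{\<omega>\<in>space M. a < psum tau X0 j K \<omega>} \<in> sets M" by measurable
    qed (rule finJn)
    have "L = {\<omega>\<in>space M. \<forall>i\<in>Ms. a < tau i (X0 i) \<omega>} \<inter> {\<omega>\<in>space M. psum tau X0 1 x \<omega> < a} \<inter>
              {\<omega>\<in>space M. \<forall>j\<in>Jn. a < psum tau X0 j K \<omega>}" unfolding L_def by blast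
    then show ?thesis using s1 s2 s3 by simp
  qed
  have LE: "prob L \<le> prob {\<omega> \<in> space M. enat x < urn_limit tau X0 A 1 \<omega>}"
  proof (rule finite_measure_mono_AE[OF _ E_sets])
    show "AE \<omega> in M. \<omega> \<in> L \<longrightarrow> \<omega> \<in> {\<omega> \<in> space M. enat x < urn_limit tau X0 A 1 \<omega>}"
      using AE_pos
    proof eventually_elim
      case (elim \<omega>)
      show ?case
      proof
        assume "\<omega> \<in> L"
        then have "\<omega> \<in> space M" "\<forall>i\<in>Ms. tau i (X0 i) \<omega> > a" "psum tau X0 1 x \<omega> < a"
          "\<forall>j\<in>{1..A} - Ms - {1}. psum tau X0 j K \<omega> > a" unfolding L_def Jn_def by auto
        then show "\<omega> \<in> {\<omega> \<in> space M. enat x < urn_limit tau X0 A 1 \<omega>}"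
          using lower_path[OF elim A1 Ms] by blast
      qed
    qed
  qed
  define h where "h \<omega> = Y \<omega> * exp (0 * psum tau X0 1 x \<omega>)
      - exp (- \<theta>0 * a) * (Y \<omega> * exp (\<theta>0 * psum tau X0 1 x \<omega>))
      - (\<Sum>j\<in>Jn. exp a * (Y \<omega> * exp ((- 1) * psum tau X0 j K \<omega>)))" for \<omega>
  have c0: "\<And>k. X0 1 \<le> k \<Longrightarrow> 0 < F 1 k" using F_pos'[OF one] by auto
  have cm1: "\<And>k. X0 j \<le> k \<Longrightarrow> - 1 < F j k" if "j \<in> Jn" for j
    using F_pos'[OF jA(1)[OF that]] by (smt (verit))
  note Y0 = Yexp[OF Ms(1) one Ms(2) a c0, unfolded Y_def[symmetric]]
  note Y1 = Yexp[OF Ms(1) one Ms(2) a t0(2), unfolded Y_def[symmetric]]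
  note Y2 = Yexp[OF Ms(1) jA[OF _] a cm1, unfolded Y_def[symmetric]]
  have inth: "integrable M h"
    unfolding h_def
    by (intro Bochner_Integration.integrable_diff Bochner_Integration.integrable_sum
        integrable_mult_right Y0(1) Y1(1) Y2(1))
  have "(\<integral>\<omega>. h \<omega> \<partial>M) = (\<integral>\<omega>. Y \<omega> * exp (0 * psum tau X0 1 x \<omega>) \<partial>M)
      - exp (- \<theta>0 * a) * (\<integral>\<omega>. Y \<omega> * exp (\<theta>0 * psum tau X0 1 x \<omega>) \<partial>M)
      - (\<Sum>j\<in>Jn. exp a * (\<integral>\<omega>. Y \<omega> * exp ((- 1) * psum tau X0 j K \<omega>) \<partial>M))"
  proof -
    have i0: "integrable M (\<lambda>\<omega>. Y \<omega> * exp (0 * psum tau X0 1 x \<omega>))" by (rule Y0(1))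
    have i1: "integrable M (\<lambda>\<omega>. exp (- \<theta>0 * a) * (Y \<omega> * exp (\<theta>0 * psum tau X0 1 x \<omega>)))"
      by (intro integrable_mult_right Y1(1))
    have i2: "integrable M (\<lambda>\<omega>. \<Sum>j\<in>Jn. exp a * (Y \<omega> * exp ((- 1) * psum tau X0 j K \<omega>)))"
      by (intro Bochner_Integration.integrable_sum integrable_mult_right Y2(1))
    have "(\<integral>\<omega>. h \<omega> \<partial>M) = (\<integral>\<omega>. Y \<omega> * exp (0 * psum tau X0 1 x \<omega>) \<partial>M)
      - (\<integral>\<omega>. exp (- \<theta>0 * a) * (Y \<omega> * exp (\<theta>0 * psum tau X0 1 x \<omega>)) \<partial>M)
      - (\<integral>\<omega>. (\<Sum>j\<in>Jn. exp a * (Y \<omega> * exp ((- 1) * psum tau X0 j K \<omega>))) \<partial>M)"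
      unfolding h_def
      by (subst Bochner_Integration.integral_diff[OF Bochner_Integration.integrable_diff[OF i0 i1] i2],
          subst Bochner_Integration.integral_diff[OF i0 i1]) (rule refl)
    also have "(\<integral>\<omega>. exp (- \<theta>0 * a) * (Y \<omega> * exp (\<theta>0 * psum tau X0 1 x \<omega>)) \<partial>M) =
               exp (- \<theta>0 * a) * (\<integral>\<omega>. Y \<omega> * exp (\<theta>0 * psum tau X0 1 x \<omega>) \<partial>M)"
      by (rule integral_mult_right_zero)
    also have "(\<integral>\<omega>. (\<Sum>j\<in>Jn. exp a * (Y \<omega> * exp ((- 1) * psum tau X0 j K \<omega>))) \<partial>M) =
               (\<Sum>j\<in>Jn. \<integral>\<omega>. exp a * (Y \<omega> * exp ((- 1) * psum tau X0 j K \<omega>)) \<partial>M)"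
      by (intro Bochner_Integration.integral_sum integrable_mult_right Y2(1))
    also have "\<dots> = (\<Sum>j\<in>Jn. exp a * (\<integral>\<omega>. Y \<omega> * exp ((- 1) * psum tau X0 j K \<omega>) \<partial>M))"
      by (intro sum.cong refl integral_mult_right_zero)
    finally show ?thesis .
  qed
  also have "\<dots> = exp (- a * d) *
           (1 - exp (- \<theta>0 * a) * (\<Prod>k\<in>{X0 1..x}. F 1 k / (F 1 k - \<theta>0))
              - (\<Sum>j\<in>Jn. exp a * (\<Prod>k\<in>{X0 j..K}. F j k / (F j k + 1))))"
  proof -
    have p1: "(\<Prod>k\<in>{X0 1..x}. F 1 k / (F 1 k - 0)) = 1"
    proof (intro prod.neutral ballI)
      fix k assume "k \<in> {X0 1..x}"
      then have "0 < F 1 k" using c0 by auto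
      then show "F 1 k / (F 1 k - 0) = 1" by simp
    qed
    have p2: "(\<Sum>j\<in>Jn. exp a * (\<integral>\<omega>. Y \<omega> * exp ((- 1) * psum tau X0 j K \<omega>) \<partial>M)) =
              (\<Sum>j\<in>Jn. exp a * (exp (- a * d) * (\<Prod>k\<in>{X0 j..K}. F j k / (F j k + 1))))"
      using Y2(2) unfolding d_def by (intro sum.cong refl) simp
    have e0: "(\<integral>\<omega>. Y \<omega> * exp (0 * psum tau X0 1 x \<omega>) \<partial>M) = exp (- a * d)"
      using Y0(2)[of x] p1 unfolding d_def by simp
    have e1: "(\<integral>\<omega>. Y \<omega> * exp (\<theta>0 * psum tau X0 1 x \<omega>) \<partial>M) = exp (- a * d) * (\<Prod>k\<in>{X0 1..x}. F 1 k / (F 1 k - \<theta>0))"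
      using Y1(2)[of x] unfolding d_def by simp
    show ?thesis
      unfolding p2 e0 e1
      by (simp add: sum_distrib_left algebra_simps)
  qed
  finally have ih: "(\<integral>\<omega>. h \<omega> \<partial>M) = exp (- a * d) *
           (1 - exp (- \<theta>0 * a) * (\<Prod>k\<in>{X0 1..x}. F 1 k / (F 1 k - \<theta>0))
              - (\<Sum>j\<in>Jn. exp a * (\<Prod>k\<in>{X0 j..K}. F j k / (F j k + 1))))" .
  have pw: "h \<omega> \<le> indicator L \<omega>" if sp: "\<omega> \<in> space M" for \<omega>
  proof -
    let ?p1 = "psum tau X0 1 x \<omega>"
    have hs: "h \<omega> = Y \<omega> * (1 - exp (\<theta>0 * (?p1 - a)) - (\<Sum>j\<in>Jn. exp (a - psum tau X0 j K \<omega>)))"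
    proof -
      have f1: "exp (\<theta>0 * (?p1 - a)) = exp (- \<theta>0 * a) * exp (\<theta>0 * ?p1)"
        by (simp add: exp_add[symmetric] algebra_simps)
      have f2: "exp (a - psum tau X0 j K \<omega>) = exp a * exp ((- 1) * psum tau X0 j K \<omega>)" for j
        by (simp add: exp_add[symmetric] algebra_simps)
      have "Y \<omega> * (\<Sum>j\<in>Jn. exp (a - psum tau X0 j K \<omega>)) = (\<Sum>j\<in>Jn. exp a * (Y \<omega> * exp ((- 1) * psum tau X0 j K \<omega>)))"
        unfolding f2 sum_distrib_left by (intro sum.cong refl) (simp add: algebra_simps)
      then show ?thesis unfolding h_def f1 by (simp add: algebra_simps)
    qed
    have sn: "0 \<le> (\<Sum>j\<in>Jn. exp (a - psum tau X0 j K \<omega>))" by (intro sum_nonneg) auto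
    show ?thesis
    proof (cases "\<forall>i\<in>Ms. a < tau i (X0 i) \<omega>")
      case False
      then obtain i where "i \<in> Ms" "\<not> a < tau i (X0 i) \<omega>" by blast
      then have "Y \<omega> = 0" unfolding Y_def using finMs by (intro prod_zero bexI[of _ i]) auto
      then show ?thesis using hs by simp
    next
      case True
      then have Y1: "Y \<omega> = 1" unfolding Y_def by (intro prod.neutral) auto
      show ?thesis
      proof (cases "\<omega> \<in> L")
        case True
        have ep: "0 < exp (\<theta>0 * (psum tau X0 1 x \<omega> - a))" by simp
        have "h \<omega> = 1 - exp (\<theta>0 * (psum tau X0 1 x \<omega> - a)) - (\<Sum>j\<in>Jn. exp (a - psum tau X0 j K \<omega>))"
          using hs Y1 by simp
        then have "h \<omega> \<le> 1" using sn ep by linarith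
        moreover have "indicator L \<omega> = (1::real)" using True by simp
        ultimately show ?thesis by simp
      next
        case False
        then have "\<not> ?p1 < a \<or> (\<exists>j\<in>Jn. \<not> a < psum tau X0 j K \<omega>)"
          using True sp unfolding L_def by auto
        then have "1 \<le> exp (\<theta>0 * (?p1 - a)) + (\<Sum>j\<in>Jn. exp (a - psum tau X0 j K \<omega>))"
        proof
          assume "\<not> ?p1 < a"
          then have "1 \<le> exp (\<theta>0 * (?p1 - a))" using t0(1) by simp
          then show ?thesis using sn by linarith
        next
          assume "\<exists>j\<in>Jn. \<not> a < psum tau X0 j K \<omega>"
          then obtain j where j: "j \<in> Jn" "psum tau X0 j K \<omega> \<le> a" by auto
          then have "1 \<le> exp (a - psum tau X0 j K \<omega>)" by simp
          also have "\<dots> \<le> (\<Sum>j\<in>Jn. exp (a - psum tau X0 j K \<omega>))"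
            using finJn j(1) by (intro member_le_sum) auto
          finally show ?thesis by (smt (verit) exp_gt_zero)
        qed
        then show ?thesis using hs Y1 False by simp
      qed
    qed
  qed
  have intL: "integrable M (indicator L :: 'a \<Rightarrow> real)"
    using Lm by (intro integrable_const_bound[where B=1]) (auto simp: indicator_def)
  have "(\<integral>\<omega>. h \<omega> \<partial>M) \<le> (\<integral>\<omega>. indicator L \<omega> \<partial>M)"
    by (rule integral_mono[OF inth intL pw])
  also have "\<dots> = prob L" using Lm by simp
  finally show ?thesis using ih LE unfolding d_def Jn_def by simp
qed

end


lemma sum_split_bound:
  fixes u v :: "nat \<Rightarrow> real"
  assumes u0: "\<And>k. X \<le> k \<Longrightarrow> 0 \<le> u k" and v0: "\<And>k. X \<le> k \<Longrightarrow> 0 \<le> v k"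
    and uv: "\<And>k. X \<le> k \<Longrightarrow> k0 < k \<Longrightarrow> u k \<le> v k"
  shows "(\<Sum>k\<in>{X..x}. u k) \<le> (\<Sum>k\<in>{X..k0}. u k) + (\<Sum>k\<in>{X..x}. v k)"
proof -
  have eq: "{X..x} = ({X..x} \<inter> {..k0}) \<union> ({X..x} \<inter> {k0<..})" by auto
  have "(\<Sum>k\<in>{X..x}. u k) = (\<Sum>k\<in>{X..x} \<inter> {..k0}. u k) + (\<Sum>k\<in>{X..x} \<inter> {k0<..}. u k)"
    by (subst eq, rule sum.union_disjoint) auto
  also have "(\<Sum>k\<in>{X..x} \<inter> {..k0}. u k) \<le> (\<Sum>k\<in>{X..k0}. u k)"
    by (rule sum_mono2) (auto intro: u0)
  also have "(\<Sum>k\<in>{X..x} \<inter> {k0<..}. u k) \<le> (\<Sum>k\<in>{X..x} \<inter> {k0<..}. v k)"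
    by (rule sum_mono) (auto intro: uv)
  also have "\<dots> \<le> (\<Sum>k\<in>{X..x}. v k)"
    by (rule sum_mono2) (auto intro: v0)
  finally show ?thesis by simp
qed

lemma ln_lower: "0 \<le> y \<Longrightarrow> y / (1 + y) \<le> ln (1 + (y::real))"
proof -
  assume y: "0 \<le> y"
  have "ln (1 / (1 + y)) \<le> 1 / (1 + y) - 1" using y by (intro ln_le_minus_one) simp
  moreover have "ln (1 / (1 + y)) = - ln (1 + y)" using y by (simp add: ln_div)
  moreover have "1 / (1 + y) - 1 = - (y / (1 + y))" using y by (simp add: field_simps)
  ultimately show ?thesis by simp
qed

lemma half_aux: "(P::real) \<le> 1/4 \<Longrightarrow> Q \<le> 1/4 \<Longrightarrow> 1/2 \<le> 1 - P - Q" by linarith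

context urn_model begin

lemma upper_f:
  assumes Ms: "Ms \<subseteq> {1..A}" "1 \<notin> Ms"
    and nsum: "\<And>j. j \<in> {1..A} \<Longrightarrow> j \<notin> Ms \<Longrightarrow> \<not> summable (\<lambda>k. 1 / F j (Suc k))"
    and F1: "filterlim (F 1) at_top sequentially" and e: "\<epsilon> > 0"
  shows "eventually (\<lambda>x. exp (- ((1 + \<epsilon>) * (\<Sum>k\<in>{X0 1..x}. 1 / F 1 k)) * (\<Sum>i\<in>Ms. F i (X0 i))) / 2
            \<le> prob {\<omega> \<in> space M. enat x < urn_limit tau X0 A 1 \<omega>}) sequentially"
proof -
  define d where "d = (\<Sum>i\<in>Ms. F i (X0 i))"
  define m where "m x = (\<Sum>k\<in>{X0 1..x}. 1 / F 1 k)" for x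
  define Jn where "Jn = {1..A} - Ms - {1}"
  have one: "1 \<in> {1..A}" using A2 by auto
  have X01: "X0 1 \<ge> 1" using X0_pos[OF one] .
  have F1p: "\<And>k. X0 1 \<le> k \<Longrightarrow> 0 < F 1 k" using F_pos'[OF one] by auto
  have m0: "0 \<le> m x" for x unfolding m_def using F1p by (intro sum_nonneg) (auto intro: less_imp_le)
  have finJn: "finite Jn" unfolding Jn_def by auto
  obtain k1 where k1: "\<And>k. k \<ge> k1 \<Longrightarrow> 1 \<le> F 1 k"
    using F1 unfolding filterlim_at_top eventually_sequentially by blast
  define \<theta>0 where "\<theta>0 = Min (insert 1 (F 1 ` {X0 1..k1})) / 2"
  have finS: "finite (insert 1 (F 1 ` {X0 1..k1}))" by auto
  have Mpos: "0 < Min (insert 1 (F 1 ` {X0 1..k1}))" using finS F1p by (subst Min_gr_iff) auto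
  have t0: "0 < \<theta>0" unfolding \<theta>0_def using Mpos by simp
  have t0F: "\<theta>0 < F 1 k" if k: "X0 1 \<le> k" for k
  proof (cases "k \<le> k1")
    case True
    then have "Min (insert 1 (F 1 ` {X0 1..k1})) \<le> F 1 k" using finS k by (intro Min_le) auto
    then show ?thesis unfolding \<theta>0_def using Mpos F1p[OF k] by linarith
  next
    case False
    have "Min (insert 1 (F 1 ` {X0 1..k1})) \<le> 1" using finS by (intro Min_le) auto
    moreover have "1 \<le> F 1 k" using False k1 by simp
    ultimately show ?thesis unfolding \<theta>0_def using Mpos by linarith
  qed
  obtain k2 where k2: "\<And>k. k \<ge> k2 \<Longrightarrow> \<theta>0 * (1 + 2 / \<epsilon>) \<le> F 1 k"
    using F1 unfolding filterlim_at_top eventually_sequentially by blast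
  define C2 where "C2 = (\<Sum>k\<in>{X0 1..k2}. \<theta>0 / (F 1 k - \<theta>0))"
  have sumb: "(\<Sum>k\<in>{X0 1..x}. \<theta>0 / (F 1 k - \<theta>0)) \<le> C2 + \<theta>0 * (1 + \<epsilon>/2) * m x" for x
  proof -
    have "(\<Sum>k\<in>{X0 1..x}. \<theta>0 / (F 1 k - \<theta>0)) \<le> C2 + (\<Sum>k\<in>{X0 1..x}. \<theta>0 * (1 + \<epsilon>/2) * (1 / F 1 k))"
      unfolding C2_def
    proof (rule sum_split_bound)
      fix k assume k: "X0 1 \<le> k"
      show "0 \<le> \<theta>0 / (F 1 k - \<theta>0)" using t0 t0F[OF k] by simp
      show "0 \<le> \<theta>0 * (1 + \<epsilon>/2) * (1 / F 1 k)" using t0 e F1p[OF k] by simp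
      assume "k2 < k"
      then have Fk: "\<theta>0 * (1 + 2 / \<epsilon>) \<le> F 1 k" using k2 by simp
      have Fp: "0 < F 1 k" using F1p[OF k] .
      have Fd: "0 < F 1 k - \<theta>0" using t0F[OF k] by simp
      have "\<theta>0 * F 1 k \<le> \<theta>0 * (1 + \<epsilon>/2) * (F 1 k - \<theta>0)"
      proof -
        have "\<theta>0 * (1 + 2 / \<epsilon>) * (\<epsilon> / 2) \<le> F 1 k * (\<epsilon> / 2)" using Fk e by (intro mult_right_mono) auto
        moreover have "\<theta>0 * (1 + 2 / \<epsilon>) * (\<epsilon> / 2) = \<theta>0 * (\<epsilon> / 2 + 1)" using e by (simp add: field_simps)
        ultimately have "\<theta>0 * (\<epsilon> / 2 + 1) \<le> F 1 k * (\<epsilon> / 2)" by metis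
        then have "(1 + \<epsilon>/2) * \<theta>0 \<le> (\<epsilon>/2) * F 1 k" by (simp add: algebra_simps)
        then have "\<theta>0 * ((1 + \<epsilon>/2) * \<theta>0) \<le> \<theta>0 * ((\<epsilon>/2) * F 1 k)" using t0 by (intro mult_left_mono) auto
        then show ?thesis by (simp add: algebra_simps)
      qed
      then show "\<theta>0 / (F 1 k - \<theta>0) \<le> \<theta>0 * (1 + \<epsilon>/2) * (1 / F 1 k)"
        using Fp Fd by (simp add: field_simps)
    qed
    also have "(\<Sum>k\<in>{X0 1..x}. \<theta>0 * (1 + \<epsilon>/2) * (1 / F 1 k)) = \<theta>0 * (1 + \<epsilon>/2) * m x"
      unfolding m_def by (simp add: sum_distrib_left)
    finally show ?thesis .
  qed
  have mlim: "filterlim m at_top sequentially"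
    unfolding m_def
    by (rule div_partial[OF _ nsum[OF one Ms(2)] X01]) (use F_pos[OF one] in simp)
  have ev1: "eventually (\<lambda>x. (C2 + ln 4) / (\<theta>0 * \<epsilon> / 2) \<le> m x) sequentially"
    using mlim unfolding filterlim_at_top by blast
  show ?thesis
    using ev1 unfolding eventually_sequentially
  proof (elim exE, intro exI allI impI)
    fix N x assume N: "\<forall>n\<ge>N. (C2 + ln 4) / (\<theta>0 * \<epsilon> / 2) \<le> m n" and x: "N \<le> x"
    define a where "a = (1 + \<epsilon>) * m x"
    have a0: "0 \<le> a" unfolding a_def using m0 e by simp
    have mx: "(C2 + ln 4) / (\<theta>0 * \<epsilon> / 2) \<le> m x" using N x by simp
    have T1: "exp (- \<theta>0 * a) * (\<Prod>k\<in>{X0 1..x}. F 1 k / (F 1 k - \<theta>0)) \<le> 1/4"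
    proof -
      have "(\<Prod>k\<in>{X0 1..x}. F 1 k / (F 1 k - \<theta>0)) \<le> exp (\<Sum>k\<in>{X0 1..x}. \<theta>0 / (F 1 k - \<theta>0))"
        using t0 t0F by (intro prod_ratio_le_exp) auto
      also have "\<dots> \<le> exp (C2 + \<theta>0 * (1 + \<epsilon>/2) * m x)" using sumb by simp
      finally have "exp (- \<theta>0 * a) * (\<Prod>k\<in>{X0 1..x}. F 1 k / (F 1 k - \<theta>0)) \<le>
                    exp (- \<theta>0 * a) * exp (C2 + \<theta>0 * (1 + \<epsilon>/2) * m x)"
        by (intro mult_left_mono) auto
      also have "\<dots> = exp (C2 - (\<theta>0 * \<epsilon> / 2) * m x)"
        unfolding a_def by (simp add: exp_add[symmetric] algebra_simps)
      also have "\<dots> \<le> exp (- ln 4)"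
      proof -
        have "C2 + ln 4 \<le> (\<theta>0 * \<epsilon> / 2) * m x" using mx t0 e by (simp add: field_simps)
        then show ?thesis by simp
      qed
      also have "\<dots> = 1/4" by (simp add: exp_minus)
      finally show ?thesis .
    qed
    define B where "B = 4 * (real (card Jn) + 1) * exp a"
    have evK: "eventually (\<lambda>K. \<forall>j\<in>Jn. B \<le> (\<Sum>k\<in>{X0 j..K}. 1 / F j k)) sequentially"
    proof (rule eventually_ball_finite[OF finJn], rule ballI)
      fix j assume j: "j \<in> Jn"
      then have jA: "j \<in> {1..A}" "j \<notin> Ms" unfolding Jn_def by auto
      have "filterlim (\<lambda>K. \<Sum>k\<in>{X0 j..K}. 1 / F j k) at_top sequentially"
        by (rule div_partial[OF _ nsum[OF jA] X0_pos[OF jA(1)]]) (use F_pos[OF jA(1)] in simp)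
      then show "eventually (\<lambda>K. B \<le> (\<Sum>k\<in>{X0 j..K}. 1 / F j k)) sequentially"
        unfolding filterlim_at_top by blast
    qed
    then obtain K where K: "\<forall>j\<in>Jn. B \<le> (\<Sum>k\<in>{X0 j..K}. 1 / F j k)"
      unfolding eventually_sequentially by blast
    have Bpos: "0 < B" unfolding B_def by simp
    have T2: "(\<Sum>j\<in>Jn. exp a * (\<Prod>k\<in>{X0 j..K}. F j k / (F j k + 1))) \<le> 1/4"
    proof -
      have "(\<Sum>j\<in>Jn. exp a * (\<Prod>k\<in>{X0 j..K}. F j k / (F j k + 1))) \<le> (\<Sum>j\<in>Jn. 1 / (4 * (real (card Jn) + 1)))"
      proof (rule sum_mono)
        fix j assume j: "j \<in> Jn"
        then have jA: "j \<in> {1..A}" unfolding Jn_def by auto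
        have "(\<Prod>k\<in>{X0 j..K}. F j k / (F j k + 1)) \<le> 1 / (1 + (\<Sum>k\<in>{X0 j..K}. 1 / F j k))"
          using F_pos'[OF jA] by (intro prod_ratio_plus_le) auto
        also have "\<dots> \<le> 1 / B" using K j Bpos by (intro divide_left_mono) auto
        finally have "exp a * (\<Prod>k\<in>{X0 j..K}. F j k / (F j k + 1)) \<le> exp a * (1 / B)"
          by (intro mult_left_mono) auto
        also have "\<dots> = 1 / (4 * (real (card Jn) + 1))" unfolding B_def by simp
        finally show "exp a * (\<Prod>k\<in>{X0 j..K}. F j k / (F j k + 1)) \<le> 1 / (4 * (real (card Jn) + 1))" .
      qed
      also have "\<dots> = real (card Jn) / (4 * (real (card Jn) + 1))" by simp
      also have "\<dots> \<le> 1/4" by (simp add: field_simps)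
      finally show ?thesis .
    qed
    define Z where "Z = 1 - exp (- \<theta>0 * a) * (\<Prod>k\<in>{X0 1..x}. F 1 k / (F 1 k - \<theta>0))
              - (\<Sum>j\<in>Jn. exp a * (\<Prod>k\<in>{X0 j..K}. F j k / (F j k + 1)))"
    have LP: "exp (- a * d) * Z \<le> prob {\<omega> \<in> space M. enat x < urn_limit tau X0 A 1 \<omega>}"
      using lower_prob[OF Ms a0 t0 t0F, of x K] unfolding d_def Jn_def Z_def .
    have Zh: "1/2 \<le> Z" unfolding Z_def by (rule half_aux[OF T1 T2])
    have "exp (- a * d) * (1/2) \<le> exp (- a * d) * Z" by (rule mult_left_mono[OF Zh]) simp
    moreover have "exp (- ((1 + \<epsilon>) * m x) * d) / 2 = exp (- a * d) * (1/2)" unfolding a_def by simp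
    ultimately have "exp (- ((1 + \<epsilon>) * m x) * d) / 2 \<le> prob {\<omega> \<in> space M. enat x < urn_limit tau X0 A 1 \<omega>}"
      using LP by linarith
    then show "exp (- ((1 + \<epsilon>) * (\<Sum>k\<in>{X0 1..x}. 1 / F 1 k)) * (\<Sum>i\<in>Ms. F i (X0 i))) / 2
            \<le> prob {\<omega> \<in> space M. enat x < urn_limit tau X0 A 1 \<omega>}" unfolding m_def d_def .
  qed
qed


lemma lower_f:
  assumes Ms: "Ms \<subseteq> {1..A}" "1 \<notin> Ms"
    and sm: "\<And>i. i \<in> Ms \<Longrightarrow> summable (\<lambda>k. 1 / F i (Suc k))"
    and monoF: "\<And>i k. i \<in> Ms \<Longrightarrow> X0 i \<le> k \<Longrightarrow> F i (X0 i) \<le> F i k"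
    and F1: "filterlim (F 1) at_top sequentially" and e: "0 < \<epsilon>" "\<epsilon> < 1"
  shows "\<exists>C. \<forall>x. 0 < prob {\<omega> \<in> space M. enat x < urn_limit tau X0 A 1 \<omega>} \<longrightarrow>
           (1 - \<epsilon>)^2 * ((\<Sum>i\<in>Ms. F i (X0 i)) * (\<Sum>k\<in>{X0 1..x}. 1 / F 1 k)) - C
             \<le> - ln (prob {\<omega> \<in> space M. enat x < urn_limit tau X0 A 1 \<omega>})"
proof -
  define d where "d = (\<Sum>i\<in>Ms. F i (X0 i))"
  define m where "m x = (\<Sum>k\<in>{X0 1..x}. 1 / F 1 k)" for x
  define \<theta> where "\<theta> i = (1 - \<epsilon>) * F i (X0 i)" for i
  define S where "S i = suminf (\<lambda>k. 1 / F i (Suc k))" for i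
  define C where "C i = exp (\<theta> i / \<epsilon> * S i)" for i
  have finMs: "finite Ms" using Ms(1) finite_subset by blast
  have one: "1 \<in> {1..A}" using A2 by auto
  have iA: "i \<in> {1..A}" if "i \<in> Ms" for i using Ms(1) that by auto
  have F1p: "\<And>k. X0 1 \<le> k \<Longrightarrow> 0 < F 1 k" using F_pos'[OF one] by auto
  have FX: "0 < F i (X0 i)" if "i \<in> Ms" for i using F_pos'[OF iA[OF that] order.refl] .
  have d0: "0 \<le> d" unfolding d_def using FX by (intro sum_nonneg) (auto intro: less_imp_le)
  have th: "0 \<le> \<theta> i \<and> \<theta> i < F i k" if i: "i \<in> Ms" and k: "X0 i \<le> k" for i k
  proof -
    have "\<theta> i < F i (X0 i)" unfolding \<theta>_def using FX[OF i] e by simp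
    moreover have "0 \<le> \<theta> i" unfolding \<theta>_def using FX[OF i] e by simp
    ultimately show ?thesis using monoF[OF i k] by linarith
  qed
  have Cb: "(\<Prod>k\<in>{X0 i..N}. F i k / (F i k - \<theta> i)) \<le> C i" if i: "i \<in> Ms" for i N
  proof -
    have Fp: "0 < F i k" if "X0 i \<le> k" for k using F_pos'[OF iA[OF i] that] .
    have "(\<Prod>k\<in>{X0 i..N}. F i k / (F i k - \<theta> i)) \<le> exp (\<Sum>k\<in>{X0 i..N}. \<theta> i / (F i k - \<theta> i))"
      using th[OF i] by (intro prod_ratio_le_exp) auto
    also have "(\<Sum>k\<in>{X0 i..N}. \<theta> i / (F i k - \<theta> i)) \<le> (\<Sum>k\<in>{X0 i..N}. \<theta> i / \<epsilon> * (1 / F i k))"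
    proof (rule sum_mono)
      fix k assume "k \<in> {X0 i..N}"
      then have k: "X0 i \<le> k" by simp
      have t: "0 \<le> \<theta> i" "\<theta> i < F i k" using th[OF i k] by auto
      have "\<theta> i \<le> (1 - \<epsilon>) * F i k" unfolding \<theta>_def using monoF[OF i k] e by (intro mult_left_mono) auto
      then have "\<epsilon> * F i k \<le> F i k - \<theta> i" by (simp add: algebra_simps)
      moreover have "0 < \<epsilon> * F i k" using e Fp[OF k] by simp
      ultimately have "\<theta> i / (F i k - \<theta> i) \<le> \<theta> i / (\<epsilon> * F i k)"
        using t by (intro divide_left_mono) auto
      then show "\<theta> i / (F i k - \<theta> i) \<le> \<theta> i / \<epsilon> * (1 / F i k)" by simp
    qed
    also have "\<dots> = \<theta> i / \<epsilon> * (\<Sum>k\<in>{X0 i..N}. 1 / F i k)" by (simp add: sum_distrib_left)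
    also have "\<dots> \<le> \<theta> i / \<epsilon> * S i"
    proof (rule mult_left_mono)
      have X1: "1 \<le> X0 i" using X0_pos[OF iA[OF i]] .
      have "(\<Sum>k\<in>{X0 i..N}. 1 / F i k) \<le> (\<Sum>k\<in>{1..N}. 1 / F i k)"
        using X1 F_pos[OF iA[OF i]] by (intro sum_mono2) (auto intro: less_imp_le)
      also have "\<dots> = (\<Sum>k<N. 1 / F i (Suc k))" by (simp add: sum.atLeast1_atMost_eq)
      also have "\<dots> \<le> S i" unfolding S_def
        using F_pos[OF iA[OF i]] by (intro sum_le_suminf sm[OF i]) (auto intro: less_imp_le)
      finally show "(\<Sum>k\<in>{X0 i..N}. 1 / F i k) \<le> S i" .
      show "0 \<le> \<theta> i / \<epsilon>" using th[OF i order.refl] e by simp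
    qed
    finally show ?thesis unfolding C_def by simp
  qed
  have sth: "(\<Sum>i\<in>Ms. \<theta> i) = (1 - \<epsilon>) * d" unfolding \<theta>_def d_def by (simp add: sum_distrib_left)
  define C\<epsilon> where "C\<epsilon> = (\<Prod>i\<in>Ms. C i)"
  have Cpos: "0 < C\<epsilon>" unfolding C\<epsilon>_def C_def by (intro prod_pos) auto
  obtain k3 where k3: "\<And>k. k \<ge> k3 \<Longrightarrow> d / \<epsilon> \<le> F 1 k"
    using F1 unfolding filterlim_at_top eventually_sequentially by blast
  define C3 where "C3 = (\<Sum>k\<in>{X0 1..k3}. (1 - \<epsilon>)^2 * d * (1 / F 1 k))"
  have lnb: "(1 - \<epsilon>)^2 * d * m x \<le> C3 + (\<Sum>k\<in>{X0 1..x}. ln (1 + (1 - \<epsilon>) * d / F 1 k))" for x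
  proof -
    have "(\<Sum>k\<in>{X0 1..x}. (1 - \<epsilon>)^2 * d * (1 / F 1 k)) \<le> C3 + (\<Sum>k\<in>{X0 1..x}. ln (1 + (1 - \<epsilon>) * d / F 1 k))"
      unfolding C3_def
    proof (rule sum_split_bound)
      fix k assume k: "X0 1 \<le> k"
      have Fp: "0 < F 1 k" using F1p[OF k] .
      have y0: "0 \<le> (1 - \<epsilon>) * d / F 1 k" using e d0 Fp by simp
      show "0 \<le> (1 - \<epsilon>)^2 * d * (1 / F 1 k)" using d0 Fp by simp
      show "0 \<le> ln (1 + (1 - \<epsilon>) * d / F 1 k)" using y0 by simp
      assume "k3 < k"
      then have "d / \<epsilon> \<le> F 1 k" using k3 by simp
      then have "d \<le> \<epsilon> * F 1 k" using e by (simp add: field_simps)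
      then have dF: "d / F 1 k \<le> \<epsilon>" using Fp by (simp add: field_simps)
      define y where "y = (1 - \<epsilon>) * d / F 1 k"
      have y0': "0 \<le> y" unfolding y_def using y0 .
      have "(1 - \<epsilon>) * (d / F 1 k) \<le> (1 - \<epsilon>) * \<epsilon>" using dF e by (intro mult_left_mono) auto
      then have "y \<le> (1 - \<epsilon>) * \<epsilon>" unfolding y_def by simp
      moreover have "(1 - \<epsilon>) * \<epsilon> = \<epsilon> - \<epsilon> * \<epsilon>" by (simp add: algebra_simps)
      moreover have "0 \<le> \<epsilon> * \<epsilon>" by simp
      moreover have "y * (1 - \<epsilon>) \<le> y" using y0' e by (intro mult_left_le) auto
      ultimately have "y * (1 - \<epsilon>) \<le> \<epsilon>" by linarith
      then have h1: "(1 - \<epsilon>) * (1 + y) \<le> 1" by (simp add: algebra_simps)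
      have "(1 - \<epsilon>) * y * (1 + y) = y * ((1 - \<epsilon>) * (1 + y))" by (simp add: algebra_simps)
      also have "\<dots> \<le> y * 1" using h1 y0' by (intro mult_left_mono) auto
      finally have "(1 - \<epsilon>) * y * (1 + y) \<le> y" by simp
      then have "(1 - \<epsilon>) * y \<le> y / (1 + y)" using y0' by (simp add: field_simps)
      also have "\<dots> \<le> ln (1 + y)" by (rule ln_lower[OF y0'])
      finally have "(1 - \<epsilon>) * y \<le> ln (1 + y)" .
      moreover have "(1 - \<epsilon>) * y = (1 - \<epsilon>)^2 * d * (1 / F 1 k)" unfolding y_def by (simp add: power2_eq_square)
      moreover have "ln (1 + (1 - \<epsilon>) * d / F 1 k) = ln (1 + y)" unfolding y_def ..
      ultimately show "(1 - \<epsilon>)^2 * d * (1 / F 1 k) \<le> ln (1 + (1 - \<epsilon>) * d / F 1 k)" by linarith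
    qed
    moreover have "(\<Sum>k\<in>{X0 1..x}. (1 - \<epsilon>)^2 * d * (1 / F 1 k)) = (1 - \<epsilon>)^2 * d * m x"
      unfolding m_def by (simp add: sum_distrib_left)
    ultimately show ?thesis by simp
  qed
  show ?thesis
  proof (intro exI[of _ "ln C\<epsilon> + C3"] allI impI)
    fix x
    let ?P = "prob {\<omega> \<in> space M. enat x < urn_limit tau X0 A 1 \<omega>}"
    assume P: "0 < ?P"
    define P1 where "P1 = (\<Prod>k\<in>{X0 1..x}. F 1 k / (F 1 k + (1 - \<epsilon>) * d))"
    have P1pos: "0 < P1" unfolding P1_def using F1p e d0
      by (intro prod_pos) (auto intro!: divide_pos_pos add_pos_nonneg)
    have UP: "?P \<le> C\<epsilon> * P1"
      using upper_prob[OF Ms th Cb, of x] unfolding C\<epsilon>_def P1_def sth by simp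
    have "ln ?P \<le> ln (C\<epsilon> * P1)" using UP P by simp
    also have "\<dots> = ln C\<epsilon> + ln P1" using Cpos P1pos by (simp add: ln_mult)
    finally have l1: "- ln C\<epsilon> - ln P1 \<le> - ln ?P" by simp
    have l2: "- ln P1 = (\<Sum>k\<in>{X0 1..x}. ln (1 + (1 - \<epsilon>) * d / F 1 k))"
      unfolding P1_def using F1p e d0 by (intro neg_ln_prod_ratio) auto
    show "(1 - \<epsilon>)^2 * ((\<Sum>i\<in>Ms. F i (X0 i)) * (\<Sum>k\<in>{X0 1..x}. 1 / F 1 k)) - (ln C\<epsilon> + C3) \<le> - ln ?P"
      using l1 l2 lnb[of x] unfolding m_def d_def by (simp add: algebra_simps)
  qed
qed

end


lemma fin_lin:
  fixes f g a b c1 l2 E :: real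
  assumes "f \<le> g + a + l2" "g - 2 * a - c1 \<le> f" "a \<le> b" "0 \<le> a" "E = 2 * b" "0 \<le> l2"
  shows "\<bar>f - g\<bar> \<le> E + (l2 + \<bar>c1\<bar>)"
proof -
  have c: "0 \<le> \<bar>c1\<bar>" "c1 \<le> \<bar>c1\<bar>" by simp_all
  have "f - g \<le> E + (l2 + \<bar>c1\<bar>)" using assms c by linarith
  moreover have "- (f - g) \<le> E + (l2 + \<bar>c1\<bar>)" using assms c by linarith
  ultimately show ?thesis by (rule abs_leI)
qed

lemma fin_arith:
  fixes f g e \<epsilon> c1 l2 :: real
  assumes u: "f \<le> (1 + \<epsilon>) * g + l2" and l: "(1 - \<epsilon>)^2 * g - c1 \<le> f" and g0: "0 \<le> g"
    and e1: "0 < \<epsilon>" "\<epsilon> \<le> e / 2" and l2: "0 \<le> l2"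
  shows "\<bar>f - g\<bar> \<le> e * g + (l2 + \<bar>c1\<bar>)"
proof (rule fin_lin)
  show "f \<le> g + \<epsilon> * g + l2" using u by (simp add: algebra_simps)
  have q1: "(1 - 2 * \<epsilon>) * g \<le> (1 - \<epsilon>)^2 * g"
    using g0 by (intro mult_right_mono) (auto simp: power2_eq_square algebra_simps)
  have "(1 - 2 * \<epsilon>) * g - c1 \<le> f" using q1 l by linarith
  then show "g - 2 * (\<epsilon> * g) - c1 \<le> f" by (simp add: algebra_simps)
  show "\<epsilon> * g \<le> (e / 2) * g" using g0 e1 by (intro mult_right_mono) auto
  show "0 \<le> \<epsilon> * g" using e1 g0 by simp
  show "e * g = 2 * ((e / 2) * g)" by simp
qed (rule l2)

theorem theorem4:
  fixes M :: "'a measure" and tau :: "nat \<Rightarrow> nat \<Rightarrow> 'a \<Rightarrow> real"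
    and F :: "nat \<Rightarrow> nat \<Rightarrow> real" and X0 :: "nat \<Rightarrow> nat" and A :: nat
    and Mset :: "nat set"
  assumes "prob_space M"
    and "A \<ge> 2"
    and F_pos: "\<And>i k. i \<in> {1..A} \<Longrightarrow> k \<ge> 1 \<Longrightarrow> F i k > 0"
    and X0_pos: "\<And>i. i \<in> {1..A} \<Longrightarrow> X0 i \<ge> 1"
    and indep: "prob_space.indep_vars M (\<lambda>_. borel) (\<lambda>(i, k). tau i k)
                  {(i, k). i \<in> {1..A} \<and> X0 i \<le> k}"
    and expo: "\<And>i k. i \<in> {1..A} \<Longrightarrow> X0 i \<le> k \<Longrightarrow> distributed M lborel (tau i k) (exponential_density (F i k))"
    and Mset_def: "Mset = {i \<in> {1..A}. summable (\<lambda>k. 1 / F i (Suc k))}"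
    and "Mset \<noteq> {}"
    and "1 \<notin> Mset"
    and "filterlim (F 1) at_top sequentially"
    and mono: "\<And>i. i \<in> Mset \<Longrightarrow>
                 strict_mono_on {1..} (F i) \<or> (\<forall>j k. 1 \<le> j \<longrightarrow> j < k \<longrightarrow> F i k < F i j)"
  shows "(\<lambda>x::nat. - ln (measure M {\<omega> \<in> space M. urn_limit tau X0 A 1 \<omega> > enat x}))
           \<sim>[at_top] (\<lambda>x. (\<Sum>i\<in>Mset. F i (X0 i)) * (\<Sum>k\<in>{X0 1..x}. 1 / F 1 k))"
proof -
  interpret U: urn_model M tau F X0 A
    unfolding urn_model_def urn_model_axioms_def
    using assms(1,2) F_pos X0_pos indep expo by auto
  define d where "d = (\<Sum>i\<in>Mset. F i (X0 i))"
  define m where "m x = (\<Sum>k\<in>{X0 1..x}. 1 / F 1 k)" for x :: nat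
  define P where "P x = measure M {\<omega> \<in> space M. enat x < urn_limit tau X0 A 1 \<omega>}" for x :: nat
  have Ms1: "Mset \<subseteq> {1..A}" unfolding Mset_def by auto
  have one: "1 \<in> {1..A}" using assms(2) by auto
  have sm: "\<And>i. i \<in> Mset \<Longrightarrow> summable (\<lambda>k. 1 / F i (Suc k))" unfolding Mset_def by auto
  have nsum: "\<And>j. j \<in> {1..A} \<Longrightarrow> j \<notin> Mset \<Longrightarrow> \<not> summable (\<lambda>k. 1 / F j (Suc k))"
    unfolding Mset_def by auto
  have monoF: "F i (X0 i) \<le> F i k" if i: "i \<in> Mset" and k: "X0 i \<le> k" for i k
  proof -
    have iA: "i \<in> {1..A}" using Ms1 i by auto
    have X1: "1 \<le> X0 i" using X0_pos[OF iA] .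
    from mono[OF i] show ?thesis
    proof
      assume sm_on: "strict_mono_on {1..} (F i)"
      show ?thesis
      proof (cases "X0 i = k")
        case True then show ?thesis by simp
      next
        case False
        then have "X0 i < k" using k by simp
        then have "F i (X0 i) < F i k" using X1 by (intro strict_mono_onD[OF sm_on]) auto
        then show ?thesis by simp
      qed
    next
      assume dec: "\<forall>j k. 1 \<le> j \<longrightarrow> j < k \<longrightarrow> F i k < F i j"
      have F1p: "0 < F i 1" using F_pos[OF iA] by simp
      have lim0: "(\<lambda>k. 1 / F i (Suc k)) \<longlonglongrightarrow> 0" by (rule summable_LIMSEQ_zero[OF sm[OF i]])
      have "eventually (\<lambda>k. 1 / F i (Suc k) < 1 / F i 1) sequentially"
        using order_tendstoD(2)[OF lim0] F1p by simp
      then obtain k0 where k0: "\<And>k. k \<ge> k0 \<Longrightarrow> 1 / F i (Suc k) < 1 / F i 1"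
        unfolding eventually_sequentially by blast
      define kk where "kk = Suc k0"
      have "F i (Suc kk) < F i 1" using dec by (simp add: kk_def)
      moreover have "0 < F i (Suc kk)" using F_pos[OF iA] by simp
      ultimately have "1 / F i 1 < 1 / F i (Suc kk)" using F1p by (simp add: frac_less2)
      moreover have "1 / F i (Suc kk) < 1 / F i 1" using k0[of kk] by (simp add: kk_def)
      ultimately show ?thesis by simp
    qed
  qed
  have dpos: "0 < d" unfolding d_def
  proof (rule sum_pos)
    show "finite Mset" using Ms1 finite_subset by blast
    show "Mset \<noteq> {}" by fact
    fix i assume "i \<in> Mset"
    then show "0 < F i (X0 i)" using Ms1 F_pos X0_pos by auto
  qed
  have F1p: "\<And>k. X0 1 \<le> k \<Longrightarrow> 0 < F 1 k" using F_pos[OF one] X0_pos[OF one] by auto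
  have m0: "0 \<le> m x" for x unfolding m_def using F1p by (intro sum_nonneg) (auto intro: less_imp_le)
  have mlim: "filterlim m at_top sequentially"
    unfolding m_def
    by (rule div_partial[OF _ nsum[OF one assms(9)] X0_pos[OF one]]) (use F_pos[OF one] in simp)
  have glim: "filterlim (\<lambda>x. d * m x) at_top sequentially"
    unfolding filterlim_at_top
  proof
    fix Z
    have "eventually (\<lambda>x. Z / d \<le> m x) sequentially" using mlim unfolding filterlim_at_top by blast
    then show "eventually (\<lambda>x. Z \<le> d * m x) sequentially"
      by eventually_elim (use dpos in \<open>simp add: field_simps\<close>)
  qed
  have main: "(\<lambda>x. - ln (P x)) \<sim>[at_top] (\<lambda>x. d * m x)"
  proof (rule asym_from_bounds[OF glim])
    fix e :: real assume e: "0 < e"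
    define \<epsilon> where "\<epsilon> = min (1/2) (e/2)"
    have e1: "0 < \<epsilon>" "\<epsilon> < 1" "\<epsilon> \<le> e/2" using e unfolding \<epsilon>_def by auto
    have up: "eventually (\<lambda>x. exp (- ((1 + \<epsilon>) * m x) * d) / 2 \<le> P x) sequentially"
      using U.upper_f[OF Ms1 assms(9) nsum assms(10) e1(1)] unfolding m_def d_def P_def by simp
    obtain C1 where C1: "\<And>x. 0 < P x \<Longrightarrow> (1 - \<epsilon>)^2 * (d * m x) - C1 \<le> - ln (P x)"
      using U.lower_f[OF Ms1 assms(9) sm monoF assms(10) e1(1,2)] unfolding m_def d_def P_def by blast
    show "\<exists>C. eventually (\<lambda>x. \<bar>- ln (P x) - d * m x\<bar> \<le> e * (d * m x) + C) sequentially"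
    proof (intro exI[of _ "ln 2 + \<bar>C1\<bar>"])
      show "eventually (\<lambda>x. \<bar>- ln (P x) - d * m x\<bar> \<le> e * (d * m x) + (ln 2 + \<bar>C1\<bar>)) sequentially"
        using up
      proof eventually_elim
        case (elim x)
        define g where "g = d * m x"
        have g0: "0 \<le> g" unfolding g_def using dpos m0 by simp
        have pos: "0 < exp (- ((1 + \<epsilon>) * m x) * d) / 2" by simp
        then have Pp: "0 < P x" using elim by linarith
        have "ln (exp (- ((1 + \<epsilon>) * m x) * d) / 2) \<le> ln (P x)"
          using elim pos Pp by simp
        moreover have "ln (exp (- ((1 + \<epsilon>) * m x) * d) / 2) = - ((1 + \<epsilon>) * g) - ln 2"
          unfolding g_def by (simp add: ln_div algebra_simps)
        ultimately have u: "- ln (P x) \<le> (1 + \<epsilon>) * g + ln 2" by linarith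
        have l: "(1 - \<epsilon>)^2 * g - C1 \<le> - ln (P x)" using C1[OF Pp] unfolding g_def .
        have "0 \<le> ln (2::real)" by simp
        from fin_arith[OF u l g0 e1(1) e1(3) this] show ?case unfolding g_def .
      qed
    qed
  qed
  then show ?thesis unfolding P_def m_def d_def .
qed


end
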